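(* Regard the vertex set of $\Upsilon_{[\mathcal Q^\flat]}$ as $\overline I^{\mathrm{tw},\flat}_\xi$. The quiver of $\widetilde B^{[\mathcal Q^\flat]}$ is obtained from $\Upsilon_{[\mathcal Q^\flat]}$ by the following four operations: - (B1) adding the arrows $(i,r)\to(i,r-2r_i)$ whenever $(i,r),(i,r-2r_i)\in\overline I^{\mathrm{tw},\flat}_\xi$; - (B2) removing all arrows of the form $(n,r)\to(n-1,r+1)$; - (B3) adding the arrows $(n,r)\to(n-1,r+3)$ whenever $(n,r)\in\overline I^{\mathrm{tw},\flat}_\xi$ and $(n-1,r+3)\in(\overline I^{\mathrm{tw},\flat}_\xi)_e$; - (B4) removing the arrows between vertices in $(\overline I^{\mathrm{tw},\flat}_\xi)_f$. More explicitly, the arrow set of the quiver of $\widetilde B^{[\mathcal Q^\flat]}$ is the union of: 1. $\{(i,r)\to(i,r-2r_i)\mid (i,r),(i,r-2r_i)\in\overline I^{\mathrm{tw},\flat}_\xi\}$; 2. $\{(i,r)\to(j,r+2)\mid i,j\le n-1,\ |i-j|=1,\ (i,r)\in\overline I^{\mathrm{tw},\flat}_\xi,\ (j,r+2)\in(\overline I^{\mathrm{tw},\flat}_\xi)_e\}$; 3. $\{(n-1,r)\to(n,r+1)\mid (n-1,r)\in\overline I^{\mathrm{tw},\flat}_\xi,\ (n,r+1)\in(\overline I^{\mathrm{tw},\flat}_\xi)_e\}$; 4. $\{(n,r)\to(n-1,r+3)\mid (n,r)\in\overline I^{\mathrm{tw},\flat}_\xi,\ (n-1,r+3)\in(\overline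 I^{\mathrm{tw},\flat}_\xi)_e\}$.
   Context: Fix $n\ge2$, and put $r_i=2$ for $1\le i\le n-1$ and $r_n=1$. Twisted AR quiver. $\mathcal Q$ is a quiver with underlying graph of type $\mathrm A_{2n-2}$, and $\xi$ a height function ($\xi(j)=\xi(i)+1$ for arrows $i\to j$). Let $\widehat I_\xi=\{(i,p):1\le i\le2n-2,\ p\equiv\xi(i)\ \mathrm{mod}\ 2,\ \xi(2n-1-i)-(2n-1)<p\le\xi(i)\}$, the vertex set of the AR quiver $\Gamma_{\mathcal Q}$, whose arrows are $(j,p-1)\to(i,p)$ for $|i-j|=1$ with both ends in $\widehat I_\xi$. Let $\phi(i,p)=(i,p)$ for $i\le n-1$ and $(i+1,p)$ for $i\ge n$. For $\flat\in\{>,<\}$, $\Upsilon_{[\mathcal Q^\flat]}$ has vertex set $\widehat I^{\mathrm{tw},\flat}_\xi$ consisting of: - $\phi(\widehat I_\xi)$; - a vertex $(n,p-\frac12)$ for each arrow $(j,p-1)\to(i,p)$ of $\Gamma_{\mathcal Q}$ with $\{i,j\}=\{n-1,n\}$; - one extra vertex $(n,r_M+\frac12)$ ($\flat={>}$) or $(n,r_m-\frac12)$ ($\flat={<}$), where $r_M$, $r_m$ are the max and min of $\{p:(n-1,p)\text{ or }(n,p)\in\widehat I_\xi\}$. Its arrows are: - $\phi(j,p-1)\to\phi(i,p)$ for arrows of $\Gamma_{\mathcal Q}$ with $\{i,j\}\ne\{n-1,n\}$; - $\phi(j,p-1)\to(n,p-\frac12)\to\phi(i,p)$ for arrows with $\{i,j\}=\{n-1,n\}$;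 - for $\flat={>}$, $v_M\to(n,r_M+\frac12)$, and for $\flat={<}$, $(n,r_m-\frac12)\to v_m$, where $v_M$ ($v_m$) is the vertex of $\phi(\widehat I_\xi)$ with first coordinate in $\{n-1,n+1\}$ and second coordinate $r_M$ ($r_m$). Vertices are relabelled by $(\imath,s)\mapsto(\imath,2s)$ ($\imath\le n$), $(2n-\imath,2s)$ ($\imath>n$), with image $\overline I^{\mathrm{tw},\flat}_\xi$. The residue of a vertex $(\imath,s)$ is $\imath$. Exchange matrix. Listing the residues of the vertices by decreasing second coordinate $s$ gives a reduced word $(\imath_1,\dots,\imath_\ell)$ of the longest element of $W(\mathrm A_{2n-1})$; positions $k$ are identified with vertices. For a position $k$, $k^+$ is the next position $>k$ with the same letter, or $\ell+1$ if none. Let $J_f=\{k:k^+=\ell+1\}$ and $J_e$ its complement; $(\overline I^{\mathrm{tw},\flat}_\xi)_e$ and $(\overline I^{\mathrm{tw},\flat}_\xi)_f$ are the corresponding vertex subsets. Let $(a_{\imath\jmath})$ be the type $\mathrm A_{2n-1}$ Cartan matrix. $\widetilde B^{[\mathcal Q^\flat]}=(b_{st})_{s\in J,t\in J_e}$ has entries: - $b_{st}=1$ if $t=s^+$; - $b_{st}=a_{\imath_s\imath_t}$ if $s<t<s^+<t^+$; - $b_{st}=-1$ if $t^+=s$; - $b_{st}=-a_{\imath_s\imath_t}$ if $t<s<t^+<s^+$; - $b_{st}=0$ otherwise. Its quiver has vertex set $J$ and an arrow $\beta\to\beta'$ whenever $b_{\beta\beta'}=1$ or $b_{\beta'\beta}=-1$.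 *)

theory Defs
  imports Main
begin

(* A vertex (i,s) of the twisted AR quiver
   Upsilon, with s a half-integer, is encoded as (i, 2*s) :: int * int, so that the
   relabelling (i,s) |-> (i,2s) / (2n-i,2s) only acts on the first coordinate. *)

datatype flat = Gt | Lt

definition Ihat :: "int \<Rightarrow> (int \<Rightarrow> int) \<Rightarrow> (int \<times> int) set" where
  "Ihat n \<xi> = {(i,p). 1 \<le> i \<and> i \<le> 2*n-2 \<and> p mod 2 = \<xi> i mod 2 \<and>
                 \<xi> (2*n-1-i) - (2*n-1) < p \<and> p \<le> \<xi> i}"

definition Gamma_arrows :: "int \<Rightarrow> (int \<Rightarrow> int) \<Rightarrow> ((int \<times> int) \<times> (int \<times> int)) set" where
  "Gamma_arrows n \<xi> = {((j,p-1),(i,p)) | i j p. \<bar>i-j\<bar> = 1 \<and>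
        (j,p-1) \<in> Ihat n \<xi> \<and> (i,p) \<in> Ihat n \<xi>}"

definition phiD :: "int \<Rightarrow> int \<times> int \<Rightarrow> int \<times> int" where
  "phiD n v = (if fst v \<le> n-1 then fst v else fst v + 1, 2 * snd v)"

definition rM :: "int \<Rightarrow> (int \<Rightarrow> int) \<Rightarrow> int" where
  "rM n \<xi> = Max {p. (n-1,p) \<in> Ihat n \<xi> \<or> (n,p) \<in> Ihat n \<xi>}"

definition rm :: "int \<Rightarrow> (int \<Rightarrow> int) \<Rightarrow> int" where
  "rm n \<xi> = Min {p. (n-1,p) \<in> Ihat n \<xi> \<or> (n,p) \<in> Ihat n \<xi>}"

definition UpsV :: "int \<Rightarrow> (int \<Rightarrow> int) \<Rightarrow> flat \<Rightarrow> (int \<times> int) set" where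
  "UpsV n \<xi> fl = phiD n ` Ihat n \<xi>
     \<union> {(n, 2*p-1) | i j p. ((j,p-1),(i,p)) \<in> Gamma_arrows n \<xi> \<and> {i,j} = {n-1,n}}
     \<union> {if fl = Gt then (n, 2 * rM n \<xi> + 1) else (n, 2 * rm n \<xi> - 1)}"

definition UpsA :: "int \<Rightarrow> (int \<Rightarrow> int) \<Rightarrow> flat \<Rightarrow> ((int \<times> int) \<times> (int \<times> int)) set" where
  "UpsA n \<xi> fl =
       {(phiD n (j,p-1), phiD n (i,p)) | i j p. ((j,p-1),(i,p)) \<in> Gamma_arrows n \<xi> \<and> {i,j} \<noteq> {n-1,n}}
     \<union> {(phiD n (j,p-1), (n, 2*p-1)) | i j p. ((j,p-1),(i,p)) \<in> Gamma_arrows n \<xi> \<and> {i,j} = {n-1,n}}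
     \<union> {((n, 2*p-1), phiD n (i,p)) | i j p. ((j,p-1),(i,p)) \<in> Gamma_arrows n \<xi> \<and> {i,j} = {n-1,n}}
     \<union> (if fl = Gt then
          {(v, (n, 2 * rM n \<xi> + 1)) | v. v \<in> phiD n ` Ihat n \<xi> \<and> fst v \<in> {n-1, n+1} \<and> snd v = 2 * rM n \<xi>}
        else
          {((n, 2 * rm n \<xi> - 1), v) | v. v \<in> phiD n ` Ihat n \<xi> \<and> fst v \<in> {n-1, n+1} \<and> snd v = 2 * rm n \<xi>})"

definition relabel :: "int \<Rightarrow> int \<times> int \<Rightarrow> int \<times> int" where
  "relabel n v = (if fst v \<le> n then fst v else 2*n - fst v, snd v)"

(* Word combinatorics; positions are 0-based: 0..<length vs, and "ell+1" becomes length vs.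
   The letter (residue) at position k is the first coordinate of vs!k. *)
definition nextpos :: "(int \<times> int) list \<Rightarrow> nat \<Rightarrow> nat" where
  "nextpos vs k = (if \<exists>k'. k < k' \<and> k' < length vs \<and> fst (vs!k') = fst (vs!k)
                   then LEAST k'. k < k' \<and> k' < length vs \<and> fst (vs!k') = fst (vs!k)
                   else length vs)"

definition Je :: "(int \<times> int) list \<Rightarrow> nat set" where
  "Je vs = {k. k < length vs \<and> nextpos vs k < length vs}"

definition Jf :: "(int \<times> int) list \<Rightarrow> nat set" where
  "Jf vs = {k. k < length vs \<and> nextpos vs k = length vs}"

definition cartanA :: "int \<Rightarrow> int \<Rightarrow> int" where
  "cartanA i j = (if i = j then 2 else if \<bar>i - j\<bar> = 1 then -1 else 0)"

definition bmat :: "(int \<times> int) list \<Rightarrow> nat \<Rightarrow> nat \<Rightarrow> int" where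
  "bmat vs s t =
     (let a = cartanA (fst (vs!s)) (fst (vs!t)) in
      if t = nextpos vs s then 1
      else if s < t \<and> t < nextpos vs s \<and> nextpos vs s < nextpos vs t then a
      else if nextpos vs t = s then -1
      else if t < s \<and> s < nextpos vs t \<and> nextpos vs t < nextpos vs s then - a
      else 0)"

(* quiver of B~ = (b_st)_{s in J, t in J_e} on vertex set J *)
definition Bquiver :: "(int \<times> int) list \<Rightarrow> (nat \<times> nat) set" where
  "Bquiver vs = {(\<beta>, \<beta>'). \<beta> < length vs \<and> \<beta>' < length vs \<and>
       ((\<beta>' \<in> Je vs \<and> bmat vs \<beta> \<beta>' = 1) \<or> (\<beta> \<in> Je vs \<and> bmat vs \<beta>' \<beta> = -1))}"

definition Bquiver_rel :: "int \<Rightarrow> (int \<times> int) list \<Rightarrow> ((int \<times> int) \<times> (int \<times> int)) set" where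
  "Bquiver_rel n vs = {(relabel n (vs!\<beta>), relabel n (vs!\<beta>')) | \<beta> \<beta>'. (\<beta>, \<beta>') \<in> Bquiver vs}"

definition Ibar :: "int \<Rightarrow> (int \<Rightarrow> int) \<Rightarrow> flat \<Rightarrow> (int \<times> int) set" where
  "Ibar n \<xi> fl = relabel n ` UpsV n \<xi> fl"

definition Ibar_e :: "int \<Rightarrow> (int \<times> int) list \<Rightarrow> (int \<times> int) set" where
  "Ibar_e n vs = {relabel n (vs!k) | k. k \<in> Je vs}"

definition Ibar_f :: "int \<Rightarrow> (int \<times> int) list \<Rightarrow> (int \<times> int) set" where
  "Ibar_f n vs = {relabel n (vs!k) | k. k \<in> Jf vs}"

definition rr :: "int \<Rightarrow> int \<Rightarrow> int" where
  "rr n i = (if i \<le> n - 1 then 2 else 1)"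

end

theory Submission
  imports Defs
begin


lemma sorted_lt:
  fixes vs :: "(int \<times> int) list"
  assumes "sorted_wrt (\<lambda>u v. snd u \<ge> snd v) vs" "i < length vs" "j < length vs" "snd (vs!i) > snd (vs!j)"
  shows "i < j"
proof (rule ccontr)
  assume "\<not> i < j"
  then have "j < i \<or> j = i" by auto
  then show False
  proof
    assume "j < i"
    then have "snd (vs!j) \<ge> snd (vs!i)" using sorted_wrt_nth_less[OF assms(1) \<open>j < i\<close> assms(2)] by simp
    then show False using assms(4) by auto
  qed (use assms in auto)
qed

lemma same_col_lt:
  fixes vs :: "(int \<times> int) list"
  assumes "sorted_wrt (\<lambda>u v. snd u \<ge> snd v) vs" "distinct vs" "i < j" "j < length vs"
    "fst (vs!i) = fst (vs!j)"
  shows "snd (vs!i) > snd (vs!j)"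
proof -
  have "snd (vs!j) \<le> snd (vs!i)" using assms sorted_wrt_nth_less[of _ vs i j] by auto
  moreover have "vs!i \<noteq> vs!j" using assms nth_eq_iff_index_eq[of vs i j] by auto
  ultimately show ?thesis using assms(5) by (cases "vs!i"; cases "vs!j") auto
qed

lemma np_bounds: "k < length vs \<Longrightarrow> k < nextpos vs k \<and> nextpos vs k \<le> length vs"
proof -
  assume k: "k < length vs"
  show ?thesis
  proof (cases "\<exists>k'. k < k' \<and> k' < length vs \<and> fst (vs!k') = fst (vs!k)")
    case True
    let ?P = "\<lambda>k'. k < k' \<and> k' < length vs \<and> fst (vs!k') = fst (vs!k)"
    have "?P (LEAST k'. ?P k')" using True by (metis (mono_tags, lifting) LeastI)
    then show ?thesis using True unfolding nextpos_def by auto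
  next
    case False
    then show ?thesis using k unfolding nextpos_def by auto
  qed
qed

lemma cartan_ne1: "cartanA i j \<noteq> 1" unfolding cartanA_def by auto

lemma Bquiver_G:
  assumes b: "b < length vs" and b': "b' < length vs"
  shows "(b,b') \<in> Bquiver vs \<longleftrightarrow> b' = nextpos vs b \<or>
      (cartanA (fst (vs!b)) (fst (vs!b')) = -1 \<and> b' < b \<and> b < nextpos vs b' \<and> nextpos vs b' < nextpos vs b)"
proof -
  have n1: "b < nextpos vs b" "nextpos vs b \<le> length vs" using np_bounds b by auto
  have n2: "b' < nextpos vs b'" "nextpos vs b' \<le> length vs" using np_bounds b' by auto
  have c1: "cartanA (fst (vs!b)) (fst (vs!b')) \<noteq> 1" "cartanA (fst (vs!b')) (fst (vs!b)) \<noteq> 1"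
    using cartan_ne1 by auto
  have cs: "cartanA (fst (vs!b')) (fst (vs!b)) = cartanA (fst (vs!b)) (fst (vs!b'))"
    unfolding cartanA_def by (auto simp: abs_minus_commute)
  show ?thesis
    unfolding Bquiver_def Je_def bmat_def Let_def using b b' n1 n2 c1 cs
    by (auto split: if_splits)
qed



lemma par_le: "even ((x::int) - y) \<Longrightarrow> x < y \<Longrightarrow> x \<le> y - 2"
proof -
  assume "even (x-y)" "x < y"
  then obtain k where "x - y = 2*k" by (metis evenE)
  with \<open>x<y\<close> have "k < 0" by linarith
  then have "k \<le> -1" by linarith
  with \<open>x - y = 2*k\<close> show ?thesis by linarith
qed

lemma mod2_iff: "(a::int) mod 2 = b mod 2 \<longleftrightarrow> (even a \<longleftrightarrow> even b)"
  by (metis even_iff_mod_2_eq_zero odd_iff_mod_2_eq_one)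

lemma odd_ex: "odd (s::int) \<Longrightarrow> \<exists>q. s = 2*q+1"
  by (metis oddE)

locale S =
  fixes n :: int and Q :: "(int \<times> int) set" and \<xi> :: "int \<Rightarrow> int"
    and fl :: flat and vs :: "(int \<times> int) list"
  assumes n2: "n \<ge> 2"
    and Q_A: "\<forall>(i,j) \<in> Q. 1 \<le> i \<and> i \<le> 2*n-2 \<and> 1 \<le> j \<and> j \<le> 2*n-2 \<and> \<bar>i - j\<bar> = 1"
    and Q_edges: "\<forall>i. 1 \<le> i \<and> i < 2*n-2 \<longrightarrow>
                     ((i, i+1) \<in> Q \<or> (i+1, i) \<in> Q) \<and> \<not> ((i, i+1) \<in> Q \<and> (i+1, i) \<in> Q)"
    and height: "\<forall>(i,j) \<in> Q. \<xi> j = \<xi> i + 1"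
    and vs_dist: "distinct vs"
    and vs_set: "set vs = UpsV n \<xi> fl"
    and vs_sorted: "sorted_wrt (\<lambda>u v. snd u \<ge> snd v) vs"
begin

lemma xi_step: "1 \<le> i \<Longrightarrow> i < 2*n-2 \<Longrightarrow> \<xi> (i+1) = \<xi> i + 1 \<or> \<xi> (i+1) = \<xi> i - 1"
proof -
  assume "1 \<le> i" "i < 2*n-2"
  then have "(i, i+1) \<in> Q \<or> (i+1, i) \<in> Q" using Q_edges by blast
  then show ?thesis
  proof
    assume "(i, i+1) \<in> Q" then show ?thesis using height by auto
  next
    assume "(i+1, i) \<in> Q" then have "\<xi> i = \<xi> (i+1) + 1" using height by auto
    then show ?thesis by auto
  qed
qed

lemma xi_step2: "1 \<le> i \<Longrightarrow> i < 2*n-2 \<Longrightarrow> \<xi> i = \<xi> (i+1) + 1 \<or> \<xi> i = \<xi> (i+1) - 1"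
  using xi_step by fastforce

lemma xi_par: "1 \<le> i \<Longrightarrow> i \<le> 2*n-2 \<Longrightarrow> even (\<xi> i) \<longleftrightarrow> (even (\<xi> 1) \<longleftrightarrow> odd i)"
proof (induction i rule: int_ge_induct)
  case base then show ?case by simp
next
  case (step i)
  then have "\<xi> (i+1) = \<xi> i + 1 \<or> \<xi> (i+1) = \<xi> i - 1" using xi_step by auto
  with step show ?case by auto
qed

lemma xi_par_adj: "1 \<le> i \<Longrightarrow> i < 2*n-2 \<Longrightarrow> even (\<xi> (i+1)) \<longleftrightarrow> odd (\<xi> i)"
  using xi_step by fastforce

lemma xi_par_star: "1 \<le> i \<Longrightarrow> i \<le> 2*n-2 \<Longrightarrow> even (\<xi> (2*n-1-i)) \<longleftrightarrow> odd (\<xi> i)"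
proof -
  assume a: "1 \<le> i" "i \<le> 2*n-2"
  have "even (\<xi> (2*n-1-i)) \<longleftrightarrow> (even (\<xi> 1) \<longleftrightarrow> odd (2*n-1-i))" using a by (intro xi_par) auto
  moreover have "even (\<xi> i) \<longleftrightarrow> (even (\<xi> 1) \<longleftrightarrow> odd i)" using a by (intro xi_par) auto
  moreover have "odd (2*n-1-i) \<longleftrightarrow> even i" by presburger
  ultimately show ?thesis by blast
qed

lemma Ihat_iff: "(i,p) \<in> Ihat n \<xi> \<longleftrightarrow> 1 \<le> i \<and> i \<le> 2*n-2 \<and> (even p \<longleftrightarrow> even (\<xi> i)) \<and>
                 \<xi> (2*n-1-i) - (2*n-1) < p \<and> p \<le> \<xi> i"
  unfolding Ihat_def mod2_iff by auto

lemma Ihat_par: "(i,p) \<in> Ihat n \<xi> \<Longrightarrow> (i,q) \<in> Ihat n \<xi> \<Longrightarrow> even (p - q)"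
  unfolding Ihat_iff by auto

lemma Ihat_nsucc: "(i,p) \<in> Ihat n \<xi> \<Longrightarrow> (i,p+1) \<notin> Ihat n \<xi>"
  unfolding Ihat_iff by auto

definition MM where "MM = max (\<xi> (n-1)) (\<xi> n)"

lemma xi_n: "\<xi> n = \<xi> (n-1) + 1 \<or> \<xi> n = \<xi> (n-1) - 1"
  using xi_step[of "n-1"] n2 by auto

lemma colS_iff: "((n-1,p) \<in> Ihat n \<xi> \<or> (n,p) \<in> Ihat n \<xi>) \<longleftrightarrow> MM - (2*n-2) \<le> p \<and> p \<le> MM"
proof -
  have a: "2*n-1-(n-1) = n" "2*n-1-n = n-1" by auto
  have b: "1 \<le> n-1" "n-1 \<le> 2*n-2" "1 \<le> n" "n \<le> 2*n-2" using n2 by auto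
  have I1: "(n-1,p) \<in> Ihat n \<xi> \<longleftrightarrow> (even p \<longleftrightarrow> even (\<xi> (n-1))) \<and> \<xi> n - (2*n-1) < p \<and> p \<le> \<xi> (n-1)"
    unfolding Ihat_iff a using b by simp
  have I2: "(n,p) \<in> Ihat n \<xi> \<longleftrightarrow> (even p \<longleftrightarrow> even (\<xi> n)) \<and> \<xi> (n-1) - (2*n-1) < p \<and> p \<le> \<xi> n"
    unfolding Ihat_iff a using b by simp
  consider (A) "\<xi> n = \<xi> (n-1) + 1" | (B) "\<xi> (n-1) = \<xi> n + 1" using xi_n by auto
  then show ?thesis
  proof cases
    case A
    then have m: "MM = \<xi> n" unfolding MM_def by auto
    have pe: "even (\<xi> (n-1)) \<longleftrightarrow> odd (\<xi> n)" using A by simp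
    show ?thesis
    proof
      assume "(n-1,p) \<in> Ihat n \<xi> \<or> (n,p) \<in> Ihat n \<xi>"
      moreover have "(even p \<longleftrightarrow> even (\<xi> n)) \<Longrightarrow> p \<noteq> \<xi> (n-1) - 2*n + 2" using pe by auto
      ultimately show "MM - (2*n-2) \<le> p \<and> p \<le> MM" unfolding I1 I2 m using A by auto
    next
      assume h: "MM - (2*n-2) \<le> p \<and> p \<le> MM"
      show "(n-1,p) \<in> Ihat n \<xi> \<or> (n,p) \<in> Ihat n \<xi>"
      proof (cases "even p \<longleftrightarrow> even (\<xi> n)")
        case True
        have "(n,p) \<in> Ihat n \<xi>" unfolding I2 using h m A True by (intro conjI; linarith?)
        then show ?thesis by blast
      next
        case False
        then have "p \<noteq> \<xi> n" by auto
        have "(n-1,p) \<in> Ihat n \<xi>" unfolding I1 using h m A False pe \<open>p \<noteq> \<xi> n\<close> by (intro conjI; (linarith | blast)?)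
        then show ?thesis by blast
      qed
    qed
  next
    case B
    then have m: "MM = \<xi> (n-1)" unfolding MM_def by auto
    have pe: "even (\<xi> n) \<longleftrightarrow> odd (\<xi> (n-1))" using B by simp
    show ?thesis
    proof
      assume "(n-1,p) \<in> Ihat n \<xi> \<or> (n,p) \<in> Ihat n \<xi>"
      moreover have "(even p \<longleftrightarrow> even (\<xi> (n-1))) \<Longrightarrow> p \<noteq> \<xi> n - 2*n + 2" using pe by auto
      ultimately show "MM - (2*n-2) \<le> p \<and> p \<le> MM" unfolding I1 I2 m using B by auto
    next
      assume h: "MM - (2*n-2) \<le> p \<and> p \<le> MM"
      show "(n-1,p) \<in> Ihat n \<xi> \<or> (n,p) \<in> Ihat n \<xi>"
      proof (cases "even p \<longleftrightarrow> even (\<xi> (n-1))")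
        case True
        have "(n-1,p) \<in> Ihat n \<xi>" unfolding I1 using h m B True by (intro conjI; linarith?)
        then show ?thesis by blast
      next
        case False
        then have "p \<noteq> \<xi> (n-1)" by auto
        have "(n,p) \<in> Ihat n \<xi>" unfolding I2 using h m B False pe \<open>p \<noteq> \<xi> (n-1)\<close> by (intro conjI; (linarith | blast)?)
        then show ?thesis by blast
      qed
    qed
  qed
qed

lemma Sset: "{p. (n-1,p) \<in> Ihat n \<xi> \<or> (n,p) \<in> Ihat n \<xi>} = {MM - (2*n-2)..MM}"
  by (rule set_eqI) (simp only: mem_Collect_eq colS_iff atLeastAtMost_iff)

lemma rM_eq: "rM n \<xi> = MM"
  unfolding rM_def Sset using n2 by (intro Max_eqI) auto

lemma rm_eq: "rm n \<xi> = MM - (2*n-2)"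
  unfolding rm_def Sset using n2 by (intro Min_eqI) auto


lemma Gamma_iff: "(x,y) \<in> Gamma_arrows n \<xi> \<longleftrightarrow> \<bar>fst y - fst x\<bar> = 1 \<and> snd x = snd y - 1 \<and> x \<in> Ihat n \<xi> \<and> y \<in> Ihat n \<xi>"
  unfolding Gamma_arrows_def by (cases x; cases y) auto

definition gc where "gc c = (if c \<le> n-1 then c else c-1)"
definition ee where "ee = (if fl = Gt then 1 else (-1::int))"
definition memV where "memV c s \<longleftrightarrow> ((c \<le> n-1 \<or> n+1 \<le> c) \<and> (\<exists>p. s = 2*p \<and> (gc c, p) \<in> Ihat n \<xi>))
   \<or> (c = n \<and> odd s \<and> 2*(MM-(2*n-2)) + ee \<le> s \<and> s \<le> 2*MM + ee)"

lemma phi_iff: "(c,s) \<in> phiD n ` Ihat n \<xi> \<longleftrightarrow> (c \<le> n-1 \<or> n+1 \<le> c) \<and> (\<exists>p. s = 2*p \<and> (gc c, p) \<in> Ihat n \<xi>)"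
proof
  assume "(c,s) \<in> phiD n ` Ihat n \<xi>"
  then obtain i p where ip: "(i,p) \<in> Ihat n \<xi>" "(c,s) = phiD n (i,p)" by auto
  then show "(c \<le> n-1 \<or> n+1 \<le> c) \<and> (\<exists>p. s = 2*p \<and> (gc c, p) \<in> Ihat n \<xi>)"
    unfolding phiD_def gc_def by (cases "i \<le> n-1") auto
next
  assume h: "(c \<le> n-1 \<or> n+1 \<le> c) \<and> (\<exists>p. s = 2*p \<and> (gc c, p) \<in> Ihat n \<xi>)"
  then obtain p where p: "s = 2*p" "(gc c, p) \<in> Ihat n \<xi>" by auto
  have "phiD n (gc c, p) = (c,s)" using h p unfolding phiD_def gc_def by auto
  with p show "(c,s) \<in> phiD n ` Ihat n \<xi>" by force
qed

lemma special_iff: "(\<exists>i j. ((j,p-1),(i,p)) \<in> Gamma_arrows n \<xi> \<and> {i,j} = {n-1,n}) \<longleftrightarrow> MM-(2*n-2)+1 \<le> p \<and> p \<le> MM"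
proof
  assume "\<exists>i j. ((j,p-1),(i,p)) \<in> Gamma_arrows n \<xi> \<and> {i,j} = {n-1,n}"
  then obtain i j where h: "((j,p-1),(i,p)) \<in> Gamma_arrows n \<xi>" "{i,j} = {n-1,n}" by blast
  then have "i = n-1 \<or> i = n" "j = n-1 \<or> j = n" by (auto simp: doubleton_eq_iff)
  moreover have "(j,p-1) \<in> Ihat n \<xi>" "(i,p) \<in> Ihat n \<xi>" using h(1) unfolding Gamma_iff by auto
  ultimately have "MM - (2*n-2) \<le> p-1" "p \<le> MM" using colS_iff by blast+
  then show "MM-(2*n-2)+1 \<le> p \<and> p \<le> MM" by auto
next
  assume h: "MM-(2*n-2)+1 \<le> p \<and> p \<le> MM"
  then have "(n-1,p) \<in> Ihat n \<xi> \<or> (n,p) \<in> Ihat n \<xi>" "(n-1,p-1) \<in> Ihat n \<xi> \<or> (n,p-1) \<in> Ihat n \<xi>"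
    using colS_iff by auto
  moreover have "(n-1,p-1) \<in> Ihat n \<xi> \<Longrightarrow> (n-1,p) \<notin> Ihat n \<xi>" "(n,p-1) \<in> Ihat n \<xi> \<Longrightarrow> (n,p) \<notin> Ihat n \<xi>"
    using Ihat_nsucc by fastforce+
  ultimately have "((n-1,p-1),(n,p)) \<in> Gamma_arrows n \<xi> \<or> ((n,p-1),(n-1,p)) \<in> Gamma_arrows n \<xi>"
    unfolding Gamma_iff by auto
  then show "\<exists>i j. ((j,p-1),(i,p)) \<in> Gamma_arrows n \<xi> \<and> {i,j} = {n-1,n}" by blast
qed

lemma mid_iff: "(c,s) \<in> {(n, 2*p-1) | i j p. ((j,p-1),(i,p)) \<in> Gamma_arrows n \<xi> \<and> {i,j} = {n-1,n}}
   \<longleftrightarrow> c = n \<and> (\<exists>p. s = 2*p-1 \<and> MM-(2*n-2)+1 \<le> p \<and> p \<le> MM)"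
  using special_iff by blast

lemma V_iff: "(c,s) \<in> UpsV n \<xi> fl \<longleftrightarrow> memV c s"
proof -
  have "(c,s) \<in> UpsV n \<xi> fl \<longleftrightarrow> (c \<le> n-1 \<or> n+1 \<le> c) \<and> (\<exists>p. s = 2*p \<and> (gc c, p) \<in> Ihat n \<xi>)
     \<or> (c = n \<and> (\<exists>p. s = 2*p-1 \<and> MM-(2*n-2)+1 \<le> p \<and> p \<le> MM))
     \<or> (c,s) = (if fl = Gt then (n, 2 * MM + 1) else (n, 2 * (MM-(2*n-2)) - 1))"
    unfolding UpsV_def Un_iff phi_iff mid_iff rM_eq rm_eq by auto
  also have "\<dots> \<longleftrightarrow> memV c s"
  proof -
    have "(c = n \<and> (\<exists>p. s = 2*p-1 \<and> MM-(2*n-2)+1 \<le> p \<and> p \<le> MM))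
       \<or> (c,s) = (if fl = Gt then (n, 2 * MM + 1) else (n, 2 * (MM-(2*n-2)) - 1))
       \<longleftrightarrow> (c = n \<and> odd s \<and> 2*(MM-(2*n-2)) + ee \<le> s \<and> s \<le> 2*MM + ee)" (is "?L \<longleftrightarrow> ?R")
    proof
      assume ?L then show ?R unfolding ee_def using n2 by (cases fl) auto
    next
      assume r: ?R
      then obtain q where q: "s = 2*q+1" using odd_ex by blast
      show ?L
      proof (cases fl)
        case Gt
        show ?thesis
        proof (cases "q = MM")
          case True then show ?thesis using r q Gt by auto
        next
          case False
          then have "s = 2*(q+1)-1 \<and> MM-(2*n-2)+1 \<le> q+1 \<and> q+1 \<le> MM" using r q Gt unfolding ee_def by auto
          then show ?thesis using r by blast
        qed
      next
        case Lt
        show ?thesis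
        proof (cases "q = MM-(2*n-2) - 1")
          case True then show ?thesis using r q Lt by auto
        next
          case False
          then have "s = 2*(q+1)-1 \<and> MM-(2*n-2)+1 \<le> q+1 \<and> q+1 \<le> MM" using r q Lt unfolding ee_def by auto
          then show ?thesis using r by blast
        qed
      qed
    qed
    then show ?thesis unfolding memV_def by blast
  qed
  finally show ?thesis .
qed

definition dd where "dd c = (if c = n then 2 else (4::int))"

lemma memV_nn: "c \<noteq> n \<Longrightarrow> memV c s \<longleftrightarrow> (c \<le> n-1 \<or> n+1 \<le> c) \<and> (\<exists>p. s = 2*p \<and> (gc c, p) \<in> Ihat n \<xi>)"
  unfolding memV_def by auto

lemma memV_n: "memV n s \<longleftrightarrow> odd s \<and> 2*(MM-(2*n-2)) + ee \<le> s \<and> s \<le> 2*MM + ee"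
  unfolding memV_def by auto

lemma Ihat_down: "(i,p) \<in> Ihat n \<xi> \<Longrightarrow> (i,p') \<in> Ihat n \<xi> \<Longrightarrow> p' < p \<Longrightarrow> p' \<le> p-2 \<and> (i,p-2) \<in> Ihat n \<xi>"
proof -
  assume a: "(i,p) \<in> Ihat n \<xi>" "(i,p') \<in> Ihat n \<xi>" "p' < p"
  then have "even (p' - p)" using Ihat_par by blast
  then have le: "p' \<le> p - 2" using a(3) par_le by blast
  moreover have "(i,p-2) \<in> Ihat n \<xi>" using a le unfolding Ihat_iff by auto
  ultimately show ?thesis by blast
qed

lemma ee_odd: "odd ee" unfolding ee_def by auto

lemma CP: "memV c s \<Longrightarrow> memV c s' \<Longrightarrow> s' < s \<Longrightarrow> s' \<le> s - dd c \<and> memV c (s - dd c)"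
proof (cases "c = n")
  case True
  assume a: "memV c s" "memV c s'" "s' < s"
  then have "odd s" "odd s'" using True memV_n by auto
  then have "even (s' - s)" by auto
  then have le: "s' \<le> s - 2" using a(3) par_le by blast
  have "memV n (s-2)" using a le True by (auto simp: memV_n)
  then show ?thesis using le True unfolding dd_def by auto
next
  case False
  assume a: "memV c s" "memV c s'" "s' < s"
  then obtain p p' where p: "s = 2*p" "(gc c, p) \<in> Ihat n \<xi>" "s' = 2*p'" "(gc c, p') \<in> Ihat n \<xi>"
    and side: "c \<le> n-1 \<or> n+1 \<le> c" using False memV_nn by auto
  then have "p' < p" using a(3) by auto
  then have "p' \<le> p-2 \<and> (gc c, p-2) \<in> Ihat n \<xi>" using p Ihat_down by blast
  moreover have "s - dd c = 2*(p-2)" using p False unfolding dd_def by auto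
  moreover have "2*(p-2) = 2*(p-2) \<and> (gc c, p-2) \<in> Ihat n \<xi>" using calculation by auto
  ultimately show ?thesis using side p False memV_nn[of c "2*(p-2)"] by auto
qed

lemma Ihat_adj: "(i,p) \<in> Ihat n \<xi> \<Longrightarrow> (i+1,q) \<in> Ihat n \<xi> \<Longrightarrow> odd (p - q)"
proof -
  assume a: "(i,p) \<in> Ihat n \<xi>" "(i+1,q) \<in> Ihat n \<xi>"
  then have "1 \<le> i" "i < 2*n-2" unfolding Ihat_iff by auto
  then have "even (\<xi> (i+1)) \<longleftrightarrow> odd (\<xi> i)" using xi_par_adj by blast
  with a show ?thesis unfolding Ihat_iff by auto
qed

lemma ADJ: "memV c s \<Longrightarrow> memV c' s' \<Longrightarrow> \<bar>c - c'\<bar> = 1 \<Longrightarrow> s \<noteq> s'"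
proof (cases "c = n \<or> c' = n")
  case True
  assume a: "memV c s" "memV c' s'" "\<bar>c - c'\<bar> = 1"
  show ?thesis
  proof (cases "c = n")
    case True
    then have "c' \<noteq> n" using a by auto
    then show ?thesis using a True memV_n memV_nn by fastforce
  next
    case False
    then have "c' = n" using \<open>c = n \<or> c' = n\<close> by auto
    then show ?thesis using a False memV_n memV_nn by fastforce
  qed
next
  case False
  assume a: "memV c s" "memV c' s'" "\<bar>c - c'\<bar> = 1"
  then obtain p p' where p: "s = 2*p" "(gc c, p) \<in> Ihat n \<xi>" "s' = 2*p'" "(gc c', p') \<in> Ihat n \<xi>"
    and side: "c \<le> n-1 \<or> n+1 \<le> c" "c' \<le> n-1 \<or> n+1 \<le> c'" using False memV_nn by auto
  have "gc c' = gc c + 1 \<or> gc c = gc c' + 1" using side a(3) False unfolding gc_def by auto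
  then have "odd (p - p')" using p Ihat_adj by (metis even_minus minus_diff_eq)
  then show ?thesis using p by auto
qed

lemma bottom_n: "memV n s \<Longrightarrow> \<not> memV n (s-2) \<Longrightarrow> s = 2*(MM-(2*n-2)) + ee"
proof -
  assume a: "memV n s" "\<not> memV n (s-2)"
  then have h: "odd s" "2*(MM-(2*n-2)) + ee \<le> s" "s \<le> 2*MM + ee" unfolding memV_n by auto
  then have "s - 2 < 2*(MM-(2*n-2)) + ee" using a(2) unfolding memV_n by auto
  moreover have "even ((2*(MM-(2*n-2)) + ee) - s)" using h(1) ee_odd by auto
  moreover have "even (s - (2*(MM-(2*n-2)) + ee))" using h(1) ee_odd by auto
  ultimately have "\<not> (2*(MM-(2*n-2)) + ee < s)" using par_le[of "2*(MM-(2*n-2)) + ee" s] by linarith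
  then show ?thesis using h(2) by linarith
qed

lemma low_side: "c = n-1 \<or> c = n+1 \<Longrightarrow> memV c s \<Longrightarrow> 2*(MM-(2*n-2)) \<le> s"
proof -
  assume a: "c = n-1 \<or> c = n+1" "memV c s"
  then have "c \<noteq> n" by auto
  then obtain p where p: "s = 2*p" "(gc c, p) \<in> Ihat n \<xi>" using a memV_nn by auto
  have "gc c = n-1 \<or> gc c = n" using a unfolding gc_def by auto
  then have "(n-1,p) \<in> Ihat n \<xi> \<or> (n,p) \<in> Ihat n \<xi>" using p by auto
  then have "MM-(2*n-2) \<le> p" using colS_iff[of p] by blast
  then show ?thesis using p by auto
qed

lemma inV: "(c,s) \<in> set vs \<longleftrightarrow> memV c s"
  using vs_set V_iff by auto

lemma nth_memV: "k < length vs \<Longrightarrow> vs!k = (c,s) \<Longrightarrow> memV c s"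
  using inV by (metis nth_mem)

lemma ex_idx: "memV c s \<Longrightarrow> \<exists>k < length vs. vs!k = (c,s)"
  using inV by (metis in_set_conv_nth)

lemma dd_pos: "dd c > 0" unfolding dd_def by auto

lemma NPa: assumes k: "k < length vs" "vs!k = (c,s)" and k1: "k1 < length vs" "vs!k1 = (c, s - dd c)"
  shows "nextpos vs k = k1"
proof -
  have kk1: "k < k1" using sorted_lt[OF vs_sorted k(1) k1(1)] k k1 dd_pos[of c] by auto
  let ?P = "\<lambda>k'. k < k' \<and> k' < length vs \<and> fst (vs!k') = fst (vs!k)"
  have P1: "?P k1" using kk1 k k1 by auto
  have "(LEAST k'. ?P k') = k1"
  proof (rule Least_equality)
    show "?P k1" by (rule P1)
  next
    fix y assume y: "?P y"
    show "k1 \<le> y"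
    proof (rule ccontr)
      assume "\<not> k1 \<le> y"
      then have yk1: "y < k1" by auto
      obtain c' t where yt: "vs!y = (c',t)" by (cases "vs!y")
      then have c': "c' = c" using y k by auto
      have "t > s - dd c" using same_col_lt[OF vs_sorted vs_dist yk1 k1(1)] yt k1 c' by auto
      moreover have "t < s" using same_col_lt[OF vs_sorted vs_dist _ _] y yt k c' by fastforce
      moreover have "memV c t" using nth_memV y yt c' by auto
      moreover have "memV c s" using nth_memV k by auto
      ultimately show False using CP[of c s t] by auto
    qed
  qed
  then show ?thesis using P1 unfolding nextpos_def by auto
qed

lemma NPb: assumes k: "k < length vs" "vs!k = (c,s)" and nm: "\<not> memV c (s - dd c)"
  shows "nextpos vs k = length vs"
proof -
  have "\<not> (\<exists>k'. k < k' \<and> k' < length vs \<and> fst (vs!k') = fst (vs!k))"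
  proof
    assume "\<exists>k'. k < k' \<and> k' < length vs \<and> fst (vs!k') = fst (vs!k)"
    then obtain k' where k': "k < k'" "k' < length vs" "fst (vs!k') = fst (vs!k)" by blast
    obtain c' t where yt: "vs!k' = (c',t)" by (cases "vs!k'")
    then have c': "c' = c" using k' k by auto
    have "t < s" using same_col_lt[OF vs_sorted vs_dist k'(1) k'(2)] yt k c' by auto
    moreover have "memV c t" using nth_memV k' yt c' by auto
    moreover have "memV c s" using nth_memV k by auto
    ultimately show False using CP[of c s t] nm by auto
  qed
  then show ?thesis unfolding nextpos_def by auto
qed

lemma ord_adj: assumes a: "a < length vs" "vs!a = (x,t)" and b: "b < length vs" "vs!b = (y,u)"
  and xy: "\<bar>x - y\<bar> = 1"
  shows "a < b \<longleftrightarrow> u < t"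
proof -
  have "t \<noteq> u" using ADJ[of x t y u] nth_memV a b xy by auto
  then consider "u < t" | "t < u" by linarith
  then show ?thesis
  proof cases
    case 1 then show ?thesis using sorted_lt[OF vs_sorted a(1) b(1)] a b by auto
  next
    case 2 then have "b < a" using sorted_lt[OF vs_sorted b(1) a(1)] a b by auto
    then show ?thesis using 2 by auto
  qed
qed

definition Arr where "Arr c s c' s' \<longleftrightarrow> (c' = c \<and> s' = s - dd c) \<or>
   (\<bar>c - c'\<bar> = 1 \<and> memV c' (s' - dd c') \<and> s < s' \<and> s' - dd c' < s \<and> (\<not> memV c (s - dd c) \<or> s - dd c < s' - dd c'))"

lemma BQ_vert: assumes k: "k < length vs" "vs!k = (c,s)" and k': "k' < length vs" "vs!k' = (c',s')"
  shows "(k,k') \<in> Bquiver vs \<longleftrightarrow> Arr c s c' s'"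
proof -
  have P1: "k' = nextpos vs k \<longleftrightarrow> (c' = c \<and> s' = s - dd c)"
  proof
    assume h: "k' = nextpos vs k"
    show "c' = c \<and> s' = s - dd c"
    proof (cases "memV c (s - dd c)")
      case True
      then obtain k1 where "k1 < length vs" "vs!k1 = (c, s - dd c)" using ex_idx by blast
      then have "nextpos vs k = k1" using NPa k by blast
      then show ?thesis using h k' \<open>vs!k1 = (c, s - dd c)\<close> by auto
    next
      case False
      then have "nextpos vs k = length vs" using NPb k by blast
      then show ?thesis using h k' by auto
    qed
  next
    assume "c' = c \<and> s' = s - dd c"
    then show "k' = nextpos vs k" using NPa[OF k k'(1)] k' by auto
  qed
  have P2: "cartanA (fst (vs!k)) (fst (vs!k')) = -1 \<longleftrightarrow> \<bar>c - c'\<bar> = 1"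
    using k k' unfolding cartanA_def by auto
  have P3: "\<bar>c - c'\<bar> = 1 \<Longrightarrow> (k' < k \<and> k < nextpos vs k' \<and> nextpos vs k' < nextpos vs k) \<longleftrightarrow>
      (memV c' (s' - dd c') \<and> s < s' \<and> s' - dd c' < s \<and> (\<not> memV c (s - dd c) \<or> s - dd c < s' - dd c'))"
  proof -
    assume adj: "\<bar>c - c'\<bar> = 1"
    have o1: "k' < k \<longleftrightarrow> s < s'" using ord_adj[OF k' k] adj by auto
    show ?thesis
    proof (cases "memV c' (s' - dd c')")
      case True
      then obtain k1' where k1': "k1' < length vs" "vs!k1' = (c', s' - dd c')" using ex_idx by blast
      then have np': "nextpos vs k' = k1'" using NPa k' by blast
      have o2: "k < k1' \<longleftrightarrow> s' - dd c' < s" using ord_adj[OF k k1'] adj by auto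
      show ?thesis
      proof (cases "memV c (s - dd c)")
        case True
        then obtain k1 where k1: "k1 < length vs" "vs!k1 = (c, s - dd c)" using ex_idx by blast
        then have np: "nextpos vs k = k1" using NPa k by blast
        have o3: "k1' < k1 \<longleftrightarrow> s - dd c < s' - dd c'" using ord_adj[OF k1' k1] adj by auto
        show ?thesis using o1 o2 o3 np np' True \<open>memV c' (s' - dd c')\<close> by auto
      next
        case False
        then have np: "nextpos vs k = length vs" using NPb k by blast
        show ?thesis using o1 o2 np np' False k1' \<open>memV c' (s' - dd c')\<close> by auto
      qed
    next
      case False
      then have np': "nextpos vs k' = length vs" using NPb k' by blast
      have "nextpos vs k \<le> length vs" using np_bounds k by auto
      then show ?thesis using np' False by auto
    qed
  qed
  show ?thesis unfolding Bquiver_G[OF k(1) k'(1)] P1 P2 Arr_def using P3 by auto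
qed

definition Parr where "Parr c s c' s' \<longleftrightarrow> (c' = c \<and> s' = s - dd c)
  \<or> (c \<noteq> n \<and> c' \<noteq> n \<and> \<bar>c - c'\<bar> = 1 \<and> s' = s + 2 \<and> memV c' (s - 2))
  \<or> (c \<noteq> n \<and> c' = n \<and> \<bar>c - c'\<bar> = 1 \<and> s' = s + 1 \<and> memV n (s - 1))
  \<or> (c = n \<and> c' \<noteq> n \<and> \<bar>c - c'\<bar> = 1 \<and> s' = s + 3 \<and> memV c' (s - 1))"

lemma ee_cases: "ee = 1 \<or> ee = -1" unfolding ee_def by auto

lemma Arr_iff: assumes u: "memV c s" and v: "memV c' s'"
  shows "Arr c s c' s' \<longleftrightarrow> Parr c s c' s'"
proof (cases "\<bar>c - c'\<bar> = 1")
  case False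
  then show ?thesis unfolding Arr_def Parr_def by auto
next
  case adj: True
  have cc: "c \<noteq> c'" using adj by auto
  consider (A) "c \<noteq> n" "c' \<noteq> n" | (B) "c \<noteq> n" "c' = n" | (C) "c = n" "c' \<noteq> n" using cc by auto
  then show ?thesis
  proof cases
    case A
    then obtain p p' where p: "s = 2*p" "s' = 2*p'" using u v memV_nn by meson
    have d: "dd c = 4" "dd c' = 4" using A unfolding dd_def by auto
    have "(s < s' \<and> s' - 4 < s) \<longleftrightarrow> s' = s + 2" unfolding p by presburger
    then show ?thesis unfolding Arr_def Parr_def d using A cc adj by auto
  next
    case B
    then obtain p where p: "s = 2*p" using u memV_nn by meson
    obtain q where q: "s' = 2*q+1" using v B memV_n odd_ex by meson
    have d: "dd c = 4" "dd c' = 2" using B unfolding dd_def by auto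
    have "(s < s' \<and> s' - 2 < s) \<longleftrightarrow> s' = s + 1" unfolding p q by presburger
    then show ?thesis unfolding Arr_def Parr_def d using B cc adj by auto
  next
    case C
    obtain p' where p: "s' = 2*p'" using v C memV_nn by meson
    obtain q where q: "s = 2*q+1" using u C memV_n odd_ex by meson
    have d: "dd c = 2" "dd c' = 4" using C unfolding dd_def by auto
    have side: "c' = n-1 \<or> c' = n+1" using adj C by auto
    have no1: "\<not> (\<not> memV n (s - 2) \<and> memV c' (s - 3))"
    proof
      assume h: "\<not> memV n (s - 2) \<and> memV c' (s - 3)"
      then have "s = 2*(MM-(2*n-2)) + ee" using bottom_n u C by blast
      moreover have "2*(MM-(2*n-2)) \<le> s - 3" using low_side side h by blast
      ultimately show False using ee_cases by auto
    qed
    have "(s < s' \<and> s' - 4 < s) \<longleftrightarrow> s' = s + 1 \<or> s' = s + 3" unfolding p q by presburger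
    then show ?thesis unfolding Arr_def Parr_def d using C cc adj no1 by auto
  qed
qed

definition rl where "rl c = (if c \<le> n then c else 2*n - c)"

lemma relabel_eq: "relabel n (c,s) = (rl c, s)" unfolding relabel_def rl_def by auto

definition LHS where "LHS = {((rl c, s), (rl c', s')) | c s c' s'. memV c s \<and> memV c' s' \<and> Parr c s c' s'}"

lemma BQrel_eq: "Bquiver_rel n vs = LHS"
proof
  show "Bquiver_rel n vs \<subseteq> LHS"
  proof
    fix x assume "x \<in> Bquiver_rel n vs"
    then obtain b b' where bb: "x = (relabel n (vs!b), relabel n (vs!b'))" "(b,b') \<in> Bquiver vs"
      unfolding Bquiver_rel_def by blast
    then have lt: "b < length vs" "b' < length vs" unfolding Bquiver_def by auto
    obtain c s where cs: "vs!b = (c,s)" by (cases "vs!b")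
    obtain c' s' where cs': "vs!b' = (c',s')" by (cases "vs!b'")
    have m: "memV c s" "memV c' s'" using nth_memV lt cs cs' by auto
    have "Arr c s c' s'" using BQ_vert[OF lt(1) cs lt(2) cs'] bb(2) by auto
    then have "Parr c s c' s'" using Arr_iff m by auto
    then show "x \<in> LHS" unfolding LHS_def using bb(1) cs cs' m relabel_eq by auto
  qed
next
  show "LHS \<subseteq> Bquiver_rel n vs"
  proof
    fix x assume "x \<in> LHS"
    then obtain c s c' s' where h: "x = ((rl c, s), (rl c', s'))" "memV c s" "memV c' s'" "Parr c s c' s'"
      unfolding LHS_def by blast
    obtain b where b: "b < length vs" "vs!b = (c,s)" using ex_idx h by blast
    obtain b' where b': "b' < length vs" "vs!b' = (c',s')" using ex_idx h by blast
    have "Arr c s c' s'" using Arr_iff h by auto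
    then have "(b,b') \<in> Bquiver vs" using BQ_vert[OF b b'] by auto
    moreover have "x = (relabel n (vs!b), relabel n (vs!b'))" using h b b' relabel_eq by auto
    ultimately show "x \<in> Bquiver_rel n vs" unfolding Bquiver_rel_def by blast
  qed
qed

lemma Ibar_iff: "(i,r) \<in> Ibar n \<xi> fl \<longleftrightarrow> (\<exists>c. memV c r \<and> rl c = i)"
  unfolding Ibar_def using V_iff relabel_eq by (auto simp: image_iff) (metis relabel_eq prod.inject surj_pair)

lemma Je_iff: "k < length vs \<Longrightarrow> vs!k = (c,s) \<Longrightarrow> k \<in> Je vs \<longleftrightarrow> memV c (s - dd c)"
proof -
  assume k: "k < length vs" "vs!k = (c,s)"
  show ?thesis
  proof (cases "memV c (s - dd c)")
    case True
    then obtain k1 where "k1 < length vs" "vs!k1 = (c, s - dd c)" using ex_idx by blast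
    then have "nextpos vs k = k1" using NPa k by blast
    then show ?thesis unfolding Je_def using k \<open>k1 < length vs\<close> True by auto
  next
    case False
    then show ?thesis using NPb[OF k False] unfolding Je_def by auto
  qed
qed

lemma Ie_iff: "(i,r) \<in> Ibar_e n vs \<longleftrightarrow> (\<exists>c. memV c r \<and> memV c (r - dd c) \<and> rl c = i)"
proof
  assume "(i,r) \<in> Ibar_e n vs"
  then obtain k where k: "k \<in> Je vs" "(i,r) = relabel n (vs!k)" unfolding Ibar_e_def by blast
  then have kl: "k < length vs" unfolding Je_def by auto
  obtain c s where cs: "vs!k = (c,s)" by (cases "vs!k")
  then have "memV c s" using nth_memV kl by auto
  moreover have "memV c (s - dd c)" using Je_iff[OF kl cs] k by auto
  ultimately show "\<exists>c. memV c r \<and> memV c (r - dd c) \<and> rl c = i" using k(2) cs relabel_eq by auto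
next
  assume "\<exists>c. memV c r \<and> memV c (r - dd c) \<and> rl c = i"
  then obtain c where c: "memV c r" "memV c (r - dd c)" "rl c = i" by blast
  obtain k where k: "k < length vs" "vs!k = (c,r)" using ex_idx c by blast
  then have "k \<in> Je vs" using Je_iff c by auto
  moreover have "(i,r) = relabel n (vs!k)" using k c relabel_eq by auto
  ultimately show "(i,r) \<in> Ibar_e n vs" unfolding Ibar_e_def by blast
qed

lemma If_iff: "(i,r) \<in> Ibar_f n vs \<longleftrightarrow> (\<exists>c. memV c r \<and> \<not> memV c (r - dd c) \<and> rl c = i)"
proof
  assume "(i,r) \<in> Ibar_f n vs"
  then obtain k where k: "k \<in> Jf vs" "(i,r) = relabel n (vs!k)" unfolding Ibar_f_def by blast
  then have kl: "k < length vs" "k \<notin> Je vs" unfolding Jf_def Je_def by auto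
  obtain c s where cs: "vs!k = (c,s)" by (cases "vs!k")
  then have "memV c s" using nth_memV kl by auto
  moreover have "\<not> memV c (s - dd c)" using Je_iff[OF kl(1) cs] kl by auto
  ultimately show "\<exists>c. memV c r \<and> \<not> memV c (r - dd c) \<and> rl c = i" using k(2) cs relabel_eq by auto
next
  assume "\<exists>c. memV c r \<and> \<not> memV c (r - dd c) \<and> rl c = i"
  then obtain c where c: "memV c r" "\<not> memV c (r - dd c)" "rl c = i" by blast
  obtain k where k: "k < length vs" "vs!k = (c,r)" using ex_idx c by blast
  then have "k \<notin> Je vs" using Je_iff c by auto
  then have "k \<in> Jf vs" using k np_bounds[of k vs] unfolding Je_def Jf_def by auto
  moreover have "(i,r) = relabel n (vs!k)" using k c relabel_eq by auto
  ultimately show "(i,r) \<in> Ibar_f n vs" unfolding Ibar_f_def by blast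
qed

lemma memV_range: "memV c s \<Longrightarrow> 1 \<le> c \<and> c \<le> 2*n-1"
  unfolding memV_def gc_def Ihat_iff using n2 by (auto split: if_splits)

lemma memV_even: "c \<noteq> n \<Longrightarrow> memV c (2*p) \<longleftrightarrow> (c \<le> n-1 \<or> n+1 \<le> c) \<and> (gc c, p) \<in> Ihat n \<xi>"
  unfolding memV_nn by auto

lemma memV_nn_even: "c \<noteq> n \<Longrightarrow> memV c s \<Longrightarrow> \<exists>p. s = 2*p \<and> (gc c, p) \<in> Ihat n \<xi> \<and> (c \<le> n-1 \<or> n+1 \<le> c)"
  using memV_nn by auto

lemma rl_cases: "rl c = i \<Longrightarrow> (c \<le> n \<and> c = i) \<or> (n < c \<and> c = 2*n - i \<and> i < n)"
  unfolding rl_def by auto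

lemma xi_adj_any: "1 \<le> i \<Longrightarrow> i \<le> 2*n-2 \<Longrightarrow> 1 \<le> j \<Longrightarrow> j \<le> 2*n-2 \<Longrightarrow> \<bar>i - j\<bar> = 1 \<Longrightarrow> even (\<xi> j) \<longleftrightarrow> odd (\<xi> i)"
proof -
  assume a: "1 \<le> i" "i \<le> 2*n-2" "1 \<le> j" "j \<le> 2*n-2" "\<bar>i - j\<bar> = 1"
  then consider "j = i + 1" | "i = j + 1" by linarith
  then show ?thesis
  proof cases
    case 1 then show ?thesis using xi_par_adj[of i] a by auto
  next
    case 2 then show ?thesis using xi_par_adj[of j] a by auto
  qed
qed

lemma REL_par: assumes "1 \<le> i" "i \<le> n-1" "memV i (2*p)" "memV (2*n-i) (2*p')"
  shows "odd (p - p')"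
proof -
  have i1: "(i,p) \<in> Ihat n \<xi>" using assms memV_even[of i p] unfolding gc_def by auto
  have g: "gc (2*n-i) = 2*n-1-i" unfolding gc_def using assms by auto
  have i2: "(2*n-1-i,p') \<in> Ihat n \<xi>" using assms(4) memV_even[of "2*n-i" p'] g assms(2) by auto
  have "even (\<xi> (2*n-1-i)) \<longleftrightarrow> odd (\<xi> i)" using xi_par_star assms n2 by auto
  then show ?thesis using i1 i2 unfolding Ihat_iff by auto
qed

lemma INJ: assumes "memV c s" "memV c' s" "rl c = rl c'" shows "c = c'"
proof (rule ccontr)
  assume ne: "c \<noteq> c'"
  have r: "1 \<le> c" "1 \<le> c'" "c \<le> 2*n-1" "c' \<le> 2*n-1" using memV_range assms by auto
  have "(c < n \<and> c' = 2*n - c) \<or> (c' < n \<and> c = 2*n - c')" using assms(3) ne unfolding rl_def by (auto split: if_splits)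
  then show False
  proof
    assume h: "c < n \<and> c' = 2*n - c"
    then obtain p where p: "s = 2*p" using memV_nn_even assms(1) by fastforce
    have "odd (p - p)" using REL_par[of c p p] h p assms r by auto
    then show False by simp
  next
    assume h: "c' < n \<and> c = 2*n - c'"
    then obtain p where p: "s = 2*p" using memV_nn_even assms(2) by fastforce
    have "odd (p - p)" using REL_par[of c' p p] h p assms r by auto
    then show False by simp
  qed
qed

lemma Ie_not_If: "(i,r) \<in> Ibar_e n vs \<Longrightarrow> (i,r) \<notin> Ibar_f n vs"
  unfolding Ie_iff If_iff using INJ by blast

lemma LHS_notFF: "x \<in> LHS \<Longrightarrow> \<not> (fst x \<in> Ibar_f n vs \<and> snd x \<in> Ibar_f n vs)"
proof -
  assume "x \<in> LHS"
  then obtain c s c' s' where h: "x = ((rl c, s), (rl c', s'))" "memV c s" "memV c' s'" "Parr c s c' s'"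
    unfolding LHS_def by blast
  have "(rl c, s) \<in> Ibar_e n vs \<or> (rl c', s') \<in> Ibar_e n vs"
  proof -
    consider (P1) "c' = c \<and> s' = s - dd c"
      | (P2) "c \<noteq> n \<and> c' \<noteq> n \<and> \<bar>c - c'\<bar> = 1 \<and> s' = s + 2 \<and> memV c' (s - 2)"
      | (P3) "c \<noteq> n \<and> c' = n \<and> \<bar>c - c'\<bar> = 1 \<and> s' = s + 1 \<and> memV n (s - 1)"
      | (P4) "c = n \<and> c' \<noteq> n \<and> \<bar>c - c'\<bar> = 1 \<and> s' = s + 3 \<and> memV c' (s - 1)"
      using h(4) unfolding Parr_def by blast
    then show ?thesis
    proof cases
      case P1 then show ?thesis using h unfolding Ie_iff by blast
    next
      case P2 then have "dd c' = 4" unfolding dd_def by auto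
      then show ?thesis using h P2 unfolding Ie_iff by force
    next
      case P3 then have "dd c' = 2" unfolding dd_def by auto
      then show ?thesis using h P3 unfolding Ie_iff by force
    next
      case P4 then have "dd c' = 4" unfolding dd_def by auto
      then show ?thesis using h P4 unfolding Ie_iff by force
    qed
  qed
  then show ?thesis using h(1) Ie_not_If by auto
qed

definition B1 where "B1 = {((i,r),(i, r - 2 * rr n i)) | i r. (i,r) \<in> Ibar n \<xi> fl \<and> (i, r - 2 * rr n i) \<in> Ibar n \<xi> fl}"
definition R2b where "R2b = {((i,r),(j,r+2)) | i j r. i \<le> n-1 \<and> j \<le> n-1 \<and> \<bar>i - j\<bar> = 1 \<and>
             (i,r) \<in> Ibar n \<xi> fl \<and> (j,r+2) \<in> Ibar_e n vs}"
definition R2c where "R2c = {((n-1,r),(n,r+1)) | r. (n-1,r) \<in> Ibar n \<xi> fl \<and> (n,r+1) \<in> Ibar_e n vs}"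
definition B3 where "B3 = {((n,r),(n-1,r+3)) | r. (n,r) \<in> Ibar n \<xi> fl \<and> (n-1,r+3) \<in> Ibar_e n vs}"

lemma dd_rr: "memV c s \<Longrightarrow> dd c = 2 * rr n (rl c)"
  using memV_range[of c s] unfolding dd_def rr_def rl_def by auto

lemma rl_adj: "c \<noteq> n \<Longrightarrow> c' \<noteq> n \<Longrightarrow> \<bar>c - c'\<bar> = 1 \<Longrightarrow> rl c \<le> n-1 \<and> rl c' \<le> n-1 \<and> \<bar>rl c - rl c'\<bar> = 1"
  unfolding rl_def by auto

lemma MIX: assumes "1 \<le> i" "i \<le> n-1" "1 \<le> j" "j \<le> n-1" "\<bar>i - j\<bar> = 1" "memV i (2*p)" "memV (2*n-j) (2*q)"
  shows "even (p - q)"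
proof -
  have i1: "(i,p) \<in> Ihat n \<xi>" using assms memV_even[of i p] unfolding gc_def by auto
  have g: "gc (2*n-j) = 2*n-1-j" unfolding gc_def using assms by auto
  have i2: "(2*n-1-j,q) \<in> Ihat n \<xi>" using assms(7) memV_even[of "2*n-j" q] g assms(4) by auto
  have "even (\<xi> (2*n-1-j)) \<longleftrightarrow> odd (\<xi> j)" using xi_par_star assms n2 by auto
  moreover have "even (\<xi> j) \<longleftrightarrow> odd (\<xi> i)" using xi_adj_any[of i j] assms n2 by auto
  ultimately show ?thesis using i1 i2 unfolding Ihat_iff by auto
qed

lemma rl_n: "rl c = n \<Longrightarrow> c = n"
  unfolding rl_def by (auto split: if_splits)

lemma rl_n1: "rl c = n-1 \<Longrightarrow> c = n-1 \<or> c = n+1"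
  unfolding rl_def by (auto split: if_splits)

lemma R2_sub: "LHS \<subseteq> B1 \<union> R2b \<union> R2c \<union> B3"
proof
  fix x assume "x \<in> LHS"
  then obtain c s c' s' where h: "x = ((rl c, s), (rl c', s'))" "memV c s" "memV c' s'" "Parr c s c' s'"
    unfolding LHS_def by blast
  consider (P1) "c' = c \<and> s' = s - dd c"
      | (P2) "c \<noteq> n \<and> c' \<noteq> n \<and> \<bar>c - c'\<bar> = 1 \<and> s' = s + 2 \<and> memV c' (s - 2)"
      | (P3) "c \<noteq> n \<and> c' = n \<and> \<bar>c - c'\<bar> = 1 \<and> s' = s + 1 \<and> memV n (s - 1)"
      | (P4) "c = n \<and> c' \<noteq> n \<and> \<bar>c - c'\<bar> = 1 \<and> s' = s + 3 \<and> memV c' (s - 1)"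
      using h(4) unfolding Parr_def by blast
  then show "x \<in> B1 \<union> R2b \<union> R2c \<union> B3"
  proof cases
    case P1
    have d: "s' = s - 2 * rr n (rl c)" using P1 dd_rr h by auto
    have "(rl c, s) \<in> Ibar n \<xi> fl" "(rl c, s - 2 * rr n (rl c)) \<in> Ibar n \<xi> fl"
      using h P1 d unfolding Ibar_iff by auto
    then have "x \<in> B1" unfolding B1_def using h P1 d by auto
    then show ?thesis by blast
  next
    case P2
    have a: "rl c \<le> n-1 \<and> rl c' \<le> n-1 \<and> \<bar>rl c - rl c'\<bar> = 1" using rl_adj P2 by blast
    have d: "dd c' = 4" using P2 unfolding dd_def by auto
    have "(rl c, s) \<in> Ibar n \<xi> fl" using h unfolding Ibar_iff by auto
    moreover have "(rl c', s+2) \<in> Ibar_e n vs" unfolding Ie_iff using h P2 d by (intro exI[of _ c']) auto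
    ultimately have "x \<in> R2b" unfolding R2b_def using h P2 a by auto
    then show ?thesis by blast
  next
    case P3
    have a: "rl c = n-1" "rl c' = n" using P3 unfolding rl_def by auto
    have d: "dd n = 2" unfolding dd_def by auto
    have "(n-1, s) \<in> Ibar n \<xi> fl" using h a unfolding Ibar_iff by auto
    moreover have "(n, s+1) \<in> Ibar_e n vs" unfolding Ie_iff using h P3 d by (intro exI[of _ n]) (auto simp: rl_def)
    ultimately have "x \<in> R2c" unfolding R2c_def using h P3 a by auto
    then show ?thesis by blast
  next
    case P4
    have a: "rl c = n" "rl c' = n-1" using P4 unfolding rl_def by auto
    have d: "dd c' = 4" using P4 unfolding dd_def by auto
    have "(n, s) \<in> Ibar n \<xi> fl" using h a unfolding Ibar_iff by auto
    moreover have "(n-1, s+3) \<in> Ibar_e n vs" unfolding Ie_iff using h P4 d a by (intro exI[of _ c']) auto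
    ultimately have "x \<in> B3" unfolding B3_def using h P4 a by auto
    then show ?thesis by blast
  qed
qed

lemma LHS_intro: "memV c s \<Longrightarrow> memV c' s' \<Longrightarrow> Parr c s c' s' \<Longrightarrow> ((rl c, s), (rl c', s')) \<in> LHS"
  unfolding LHS_def by blast

lemma B1_sub: "B1 \<subseteq> LHS"
proof
  fix x assume "x \<in> B1"
  then obtain i r where x: "x = ((i,r),(i, r - 2 * rr n i))" "(i,r) \<in> Ibar n \<xi> fl" "(i, r - 2 * rr n i) \<in> Ibar n \<xi> fl"
    unfolding B1_def by blast
  obtain c where c: "memV c r" "rl c = i" using x(2) Ibar_iff by blast
  obtain c2 where c2: "memV c2 (r - 2 * rr n i)" "rl c2 = i" using x(3) Ibar_iff by blast
  have d: "dd c = 2 * rr n i" using dd_rr c by auto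
  have "c2 = c"
  proof (rule ccontr)
    assume ne: "c2 \<noteq> c"
    have r: "1 \<le> c" "1 \<le> c2" "c \<le> 2*n-1" "c2 \<le> 2*n-1" using memV_range c c2 by auto
    have cn: "c \<noteq> n"
    proof
      assume "c = n"
      then have "i = n" using c unfolding rl_def by auto
      then have "c2 = n" using c2 rl_n by blast
      then show False using ne \<open>c = n\<close> by auto
    qed
    have i4: "rr n i = 2" "i \<le> n-1" using c c2 ne cn unfolding rr_def rl_def by (auto split: if_splits)
    obtain p where p: "r = 2*p" using memV_nn_even[OF cn c(1)] by blast
    have rp: "r - 2 * rr n i = 2*(p-2)" using p i4 by auto
    have "(c = i \<and> c2 = 2*n - i) \<or> (c2 = i \<and> c = 2*n - i)" using c c2 ne rl_cases by metis
    then show False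
    proof
      assume "c = i \<and> c2 = 2*n - i"
      then have "odd (p - (p-2))" using REL_par[of i p "p-2"] c c2 p rp r i4 by auto
      then show False by simp
    next
      assume "c2 = i \<and> c = 2*n - i"
      then have "odd ((p-2) - p)" using REL_par[of i "p-2" p] c c2 p rp r i4 by auto
      then show False by simp
    qed
  qed
  then have "Parr c r c (r - 2 * rr n i)" unfolding Parr_def using d by auto
  then show "x \<in> LHS" using LHS_intro[of c r c] c c2 \<open>c2 = c\<close> x(1) by auto
qed

lemma R2b_pre: assumes "x \<in> R2b"
  shows "\<exists>c c' r. x = ((rl c, r), (rl c', r+2)) \<and> c \<noteq> n \<and> c' \<noteq> n \<and> \<bar>c - c'\<bar> = 1 \<and> memV c r \<and> memV c' (r+2) \<and> memV c' (r-2)"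
proof -
  obtain i j r where x: "x = ((i,r),(j,r+2))" "i \<le> n-1" "j \<le> n-1" "\<bar>i - j\<bar> = 1" "(i,r) \<in> Ibar n \<xi> fl" "(j,r+2) \<in> Ibar_e n vs"
    using assms unfolding R2b_def by blast
  obtain c where c: "memV c r" "rl c = i" using x(5) Ibar_iff by blast
  obtain c' where c': "memV c' (r+2)" "memV c' (r+2 - dd c')" "rl c' = j" using x(6) Ie_iff by blast
  have cn: "c \<noteq> n" "c' \<noteq> n" using c c' x rl_def by auto
  have d: "dd c' = 4" using cn unfolding dd_def by auto
  obtain p where p: "r = 2*p" using memV_nn_even[OF cn(1) c(1)] by blast
  have rg: "1 \<le> c" "1 \<le> c'" "c \<le> 2*n-1" "c' \<le> 2*n-1" using memV_range c c' by blast+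
  have ij: "1 \<le> i" "1 \<le> j" using rg c(2) c'(3) unfolding rl_def by (auto split: if_splits)
  have r2: "r + 2 = 2*(p+1)" using p by auto
  have ci: "(c = i \<or> c = 2*n-i)" "(c' = j \<or> c' = 2*n-j)" using c c' rl_cases by metis+
  have "\<bar>c - c'\<bar> = 1"
  proof -
    have no1: "\<not> (c = i \<and> c' = 2*n-j)"
    proof
      assume h: "c = i \<and> c' = 2*n-j"
      then have "even (p - (p+1))" using MIX[of i j p "p+1"] c c' p r2 x ij by auto
      then show False by simp
    qed
    have no2: "\<not> (c = 2*n-i \<and> c' = j)"
    proof
      assume h: "c = 2*n-i \<and> c' = j"
      then have "even ((p+1) - p)" using MIX[of j i "p+1" p] c c' p r2 x ij by (auto simp: abs_minus_commute)
      then show False by simp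
    qed
    show ?thesis using ci no1 no2 x(4) cn by auto
  qed
  then show ?thesis using x c c' cn d by (intro exI[of _ c] exI[of _ c'] exI[of _ r]) auto
qed

lemma R2b_sub: "R2b \<subseteq> LHS"
proof
  fix x assume "x \<in> R2b"
  then obtain c c' r where h: "x = ((rl c, r), (rl c', r+2))" "c \<noteq> n" "c' \<noteq> n" "\<bar>c - c'\<bar> = 1" "memV c r" "memV c' (r+2)" "memV c' (r-2)"
    using R2b_pre by blast
  then have "Parr c r c' (r+2)" unfolding Parr_def by auto
  then show "x \<in> LHS" using LHS_intro h by auto
qed

lemma R2c_sub: "R2c \<subseteq> LHS"
proof
  fix x assume "x \<in> R2c"
  then obtain r where x: "x = ((n-1,r),(n,r+1))" "(n-1,r) \<in> Ibar n \<xi> fl" "(n,r+1) \<in> Ibar_e n vs"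
    unfolding R2c_def by blast
  obtain c where c: "memV c r" "rl c = n-1" using x(2) Ibar_iff by blast
  obtain c' where c': "memV c' (r+1)" "memV c' (r+1 - dd c')" "rl c' = n" using x(3) Ie_iff by blast
  have "c' = n" using c' rl_n by blast
  moreover have "c = n-1 \<or> c = n+1" using c rl_n1 by blast
  moreover have "dd n = 2" unfolding dd_def by auto
  ultimately have "Parr c r c' (r+1)" unfolding Parr_def using c' by auto
  then show "x \<in> LHS" using LHS_intro[of c r c' "r+1"] c c' x(1) by auto
qed

lemma B3_sub: "B3 \<subseteq> LHS"
proof
  fix x assume "x \<in> B3"
  then obtain r where x: "x = ((n,r),(n-1,r+3))" "(n,r) \<in> Ibar n \<xi> fl" "(n-1,r+3) \<in> Ibar_e n vs"
    unfolding B3_def by blast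
  obtain c where c: "memV c r" "rl c = n" using x(2) Ibar_iff by blast
  obtain c' where c': "memV c' (r+3)" "memV c' (r+3 - dd c')" "rl c' = n-1" using x(3) Ie_iff by blast
  have "c = n" using c rl_n by blast
  moreover have "c' = n-1 \<or> c' = n+1" using c' rl_n1 by blast
  moreover have "dd c' = 4" using calculation(2) unfolding dd_def by auto
  ultimately have "Parr c r c' (r+3)" unfolding Parr_def using c' by auto
  then show "x \<in> LHS" using LHS_intro[of c r c' "r+3"] c c' x(1) by auto
qed

lemma R2_eq: "LHS = B1 \<union> R2b \<union> R2c \<union> B3"
  using R2_sub B1_sub R2b_sub R2c_sub B3_sub by blast

definition B2 where "B2 = {((n,r),(n-1,r+1)) | r. True}"
definition FF where "FF = {(u,v). u \<in> Ibar_f n vs \<and> v \<in> Ibar_f n vs}"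

lemma xi_lip: "1 \<le> a \<Longrightarrow> a \<le> 2*n-2 \<Longrightarrow> 1 \<le> b \<Longrightarrow> b \<le> 2*n-2 \<Longrightarrow> \<bar>a - b\<bar> = 1 \<Longrightarrow> \<bar>\<xi> a - \<xi> b\<bar> = 1"
proof -
  assume h: "1 \<le> a" "a \<le> 2*n-2" "1 \<le> b" "b \<le> 2*n-2" "\<bar>a - b\<bar> = 1"
  then consider "b = a + 1" | "a = b + 1" by linarith
  then show ?thesis
  proof cases
    case 1 then show ?thesis using xi_step[of a] h by auto
  next
    case 2 then show ?thesis using xi_step[of b] h by auto
  qed
qed

lemma AR_bottom: assumes "(i,p) \<in> Ihat n \<xi>" "(i,p-2) \<notin> Ihat n \<xi>" "(j,p-1) \<in> Ihat n \<xi>" "\<bar>i - j\<bar> = 1"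
  shows "(j,p-3) \<notin> Ihat n \<xi>"
proof
  assume j3: "(j,p-3) \<in> Ihat n \<xi>"
  have ri: "1 \<le> i" "i \<le> 2*n-2" "1 \<le> j" "j \<le> 2*n-2" using assms unfolding Ihat_iff by auto
  have lo: "\<xi> (2*n-1-i) - (2*n-1) \<ge> p-2" using assms(1,2) unfolding Ihat_iff by auto
  have lo2: "\<xi> (2*n-1-j) - (2*n-1) < p-3" using j3 unfolding Ihat_iff by auto
  have "\<bar>\<xi> (2*n-1-i) - \<xi> (2*n-1-j)\<bar> = 1" using xi_lip[of "2*n-1-i" "2*n-1-j"] ri assms(4) by auto
  then show False using lo lo2 by auto
qed

lemma Ihat_n_par: "(n-1,q) \<in> Ihat n \<xi> \<Longrightarrow> (n,q) \<notin> Ihat n \<xi>"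
  using xi_n unfolding Ihat_iff by auto

lemma phiD_gc: "c \<le> n-1 \<or> n+1 \<le> c \<Longrightarrow> phiD n (gc c, q) = (c, 2*q)"
  unfolding phiD_def gc_def by auto

lemma gc_phi: "fst (phiD n (i,p)) \<noteq> n \<and> gc (fst (phiD n (i,p))) = i \<and> snd (phiD n (i,p)) = 2*p
   \<and> (fst (phiD n (i,p)) \<le> n-1 \<or> n+1 \<le> fst (phiD n (i,p)))"
  unfolding phiD_def gc_def by auto

lemma memV_phi: "(i,p) \<in> Ihat n \<xi> \<Longrightarrow> memV (fst (phiD n (i,p))) (snd (phiD n (i,p)))"
  using gc_phi[of i p] memV_even by auto

lemma U1: "R2b \<subseteq> map_prod (relabel n) (relabel n) ` UpsA n \<xi> fl"
proof
  fix x assume "x \<in> R2b"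
  then obtain c c' r where h: "x = ((rl c, r), (rl c', r+2))" "c \<noteq> n" "c' \<noteq> n" "\<bar>c - c'\<bar> = 1" "memV c r" "memV c' (r+2)"
    using R2b_pre by blast
  obtain q where q: "r = 2*q" "(gc c, q) \<in> Ihat n \<xi>" "c \<le> n-1 \<or> n+1 \<le> c" using memV_nn_even h by blast
  have r2: "r + 2 = 2*(q+1)" using q by auto
  obtain q' where q': "r+2 = 2*q'" "(gc c', q') \<in> Ihat n \<xi>" "c' \<le> n-1 \<or> n+1 \<le> c'" using memV_nn_even h by blast
  have qq: "q' = q+1" using q' r2 by auto
  have side: "(c \<le> n-1 \<and> c' \<le> n-1) \<or> (n+1 \<le> c \<and> n+1 \<le> c')" using q(3) q'(3) h(4) by auto
  have g1: "\<bar>gc c' - gc c\<bar> = 1" using side h(4) unfolding gc_def by auto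
  have g2: "{gc c', gc c} \<noteq> {n-1, n}"
  proof
    assume "{gc c', gc c} = {n-1, n}"
    then have "gc c' \<in> {n-1,n}" "gc c \<in> {n-1,n}" "gc c \<noteq> gc c'" using n2 by (auto simp: doubleton_eq_iff)
    then show False using side unfolding gc_def by auto
  qed
  have G: "((gc c, q+1-1),(gc c', q+1)) \<in> Gamma_arrows n \<xi>" unfolding Gamma_iff using g1 q q' qq by auto
  have pa: "(phiD n (gc c, q+1-1), phiD n (gc c', q+1)) \<in> UpsA n \<xi> fl"
    unfolding UpsA_def using G g2 by blast
  have "phiD n (gc c, q+1-1) = (c, r)" "phiD n (gc c', q+1) = (c', r+2)" using phiD_gc q q' qq by auto
  then show "x \<in> map_prod (relabel n) (relabel n) ` UpsA n \<xi> fl"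
    using pa h(1) relabel_eq by (metis map_prod_simp image_eqI)
qed

lemma colS_lo: "(j,q) \<in> Ihat n \<xi> \<Longrightarrow> j = n-1 \<or> j = n \<Longrightarrow> MM-(2*n-2) \<le> q \<and> q \<le> MM"
  using colS_iff[of q] by auto

lemma U2: "R2c \<subseteq> map_prod (relabel n) (relabel n) ` UpsA n \<xi> fl"
proof
  fix x assume "x \<in> R2c"
  then obtain r where x: "x = ((n-1,r),(n,r+1))" "(n-1,r) \<in> Ibar n \<xi> fl" "(n,r+1) \<in> Ibar_e n vs"
    unfolding R2c_def by blast
  obtain c where c: "memV c r" "rl c = n-1" using x(2) Ibar_iff by blast
  obtain c' where c': "memV c' (r+1)" "rl c' = n" using x(3) Ie_iff by blast
  have cn': "c' = n" using c' rl_n by blast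
  have cs: "c = n-1 \<or> c = n+1" using c rl_n1 by blast
  then have cn: "c \<noteq> n" by auto
  obtain q where q: "r = 2*q" "(gc c, q) \<in> Ihat n \<xi>" "c \<le> n-1 \<or> n+1 \<le> c" using memV_nn_even[OF cn c(1)] by blast
  have gcs: "gc c = n-1 \<or> gc c = n" using cs unfolding gc_def by auto
  have qb: "MM-(2*n-2) \<le> q \<and> q \<le> MM" using colS_lo q(2) gcs by blast
  have ph: "phiD n (gc c, q) = (c, r)" using phiD_gc q by auto
  have rc: "rl c = n-1" using c by auto
  show "x \<in> map_prod (relabel n) (relabel n) ` UpsA n \<xi> fl"
  proof (cases "fl = Gt \<and> q = MM")
    case True
    have "(c, r) \<in> phiD n ` Ihat n \<xi>" using ph q(2) by force
    moreover have "fst (c,r) \<in> {n-1,n+1}" "snd (c,r) = 2 * rM n \<xi>" using cs q True rM_eq by auto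
    ultimately have "((c,r),(n, 2 * rM n \<xi> + 1)) \<in> UpsA n \<xi> fl" unfolding UpsA_def using True by auto
    moreover have "map_prod (relabel n) (relabel n) ((c,r),(n, 2 * rM n \<xi> + 1)) = x"
      using x(1) relabel_eq rc rM_eq q True by (auto simp: rl_def)
    ultimately show ?thesis by (metis image_eqI)
  next
    case False
    have "q \<noteq> MM"
    proof
      assume "q = MM"
      then have "fl = Lt" using False by (cases fl) auto
      then have "ee = -1" unfolding ee_def by auto
      moreover have "memV n (r+1)" using c' cn' by auto
      ultimately show False using q \<open>q = MM\<close> memV_n by auto
    qed
    then have qb2: "MM-(2*n-2)+1 \<le> q+1 \<and> q+1 \<le> MM" using qb by auto
    then obtain i0 j0 where G: "((j0,q+1-1),(i0,q+1)) \<in> Gamma_arrows n \<xi>" "{i0,j0} = {n-1,n}"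
      using special_iff[of "q+1"] by blast
    have j0I: "(j0, q) \<in> Ihat n \<xi>" using G(1) unfolding Gamma_iff by auto
    have j0s: "j0 = n-1 \<or> j0 = n" using G(2) by (auto simp: doubleton_eq_iff)
    have "j0 = gc c"
    proof (rule ccontr)
      assume "j0 \<noteq> gc c"
      then have "(j0 = n-1 \<and> gc c = n) \<or> (j0 = n \<and> gc c = n-1)" using j0s gcs by auto
      then show False using Ihat_n_par j0I q(2) by auto
    qed
    then have "(phiD n (j0,q+1-1), (n, 2*(q+1)-1)) \<in> UpsA n \<xi> fl" unfolding UpsA_def using G by blast
    moreover have "phiD n (j0,q+1-1) = (c, r)" using ph \<open>j0 = gc c\<close> by auto
    moreover have "map_prod (relabel n) (relabel n) ((c,r),(n, 2*(q+1)-1)) = x"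
      using x(1) relabel_eq rc q by (auto simp: rl_def)
    ultimately show ?thesis by (metis image_eqI)
  qed
qed

lemma rl_side: "c = n-1 \<or> c = n+1 \<Longrightarrow> rl c = n-1"
  unfolding rl_def by auto

lemma phi_side: "i = n-1 \<or> i = n \<Longrightarrow> fst (phiD n (i,p)) = n-1 \<or> fst (phiD n (i,p)) = n+1"
  unfolding phiD_def by auto

lemma U3: assumes ab: "(a,b) \<in> UpsA n \<xi> fl" and x: "x = map_prod (relabel n) (relabel n) (a,b)"
  and nB2: "x \<notin> B2" and nFF: "x \<notin> FF"
  shows "x \<in> R2b \<union> R2c"
proof -
  have xr: "x = ((rl (fst a), snd a), (rl (fst b), snd b))" using x relabel_eq by (cases a; cases b) auto
  have "(\<exists>i j p. a = phiD n (j,p-1) \<and> b = phiD n (i,p) \<and> ((j,p-1),(i,p)) \<in> Gamma_arrows n \<xi> \<and> {i,j} \<noteq> {n-1,n})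
     \<or> (\<exists>i j p. a = phiD n (j,p-1) \<and> b = (n, 2*p-1) \<and> ((j,p-1),(i,p)) \<in> Gamma_arrows n \<xi> \<and> {i,j} = {n-1,n})
     \<or> (\<exists>i j p. a = (n, 2*p-1) \<and> b = phiD n (i,p) \<and> ((j,p-1),(i,p)) \<in> Gamma_arrows n \<xi> \<and> {i,j} = {n-1,n})
     \<or> (fl = Gt \<and> b = (n, 2 * rM n \<xi> + 1) \<and> a \<in> phiD n ` Ihat n \<xi> \<and> fst a \<in> {n-1, n+1} \<and> snd a = 2 * rM n \<xi>)
     \<or> (fl \<noteq> Gt \<and> a = (n, 2 * rm n \<xi> - 1) \<and> b \<in> phiD n ` Ihat n \<xi> \<and> fst b \<in> {n-1, n+1} \<and> snd b = 2 * rm n \<xi>)"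
    using ab unfolding UpsA_def
    apply (elim UnE)
       apply blast
      apply blast
     apply blast
    apply (simp only: split: if_split_asm)
     apply blast
    apply blast
    done
  then consider (A1) i j p where "a = phiD n (j,p-1)" "b = phiD n (i,p)" "((j,p-1),(i,p)) \<in> Gamma_arrows n \<xi>" "{i,j} \<noteq> {n-1,n}"
    | (A2) i j p where "a = phiD n (j,p-1)" "b = (n, 2*p-1)" "((j,p-1),(i,p)) \<in> Gamma_arrows n \<xi>" "{i,j} = {n-1,n}"
    | (A3) i j p where "a = (n, 2*p-1)" "b = phiD n (i,p)" "((j,p-1),(i,p)) \<in> Gamma_arrows n \<xi>" "{i,j} = {n-1,n}"
    | (A4) "fl = Gt" "b = (n, 2 * rM n \<xi> + 1)" "a \<in> phiD n ` Ihat n \<xi>" "fst a \<in> {n-1, n+1}" "snd a = 2 * rM n \<xi>"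
    | (A5) "a = (n, 2 * rm n \<xi> - 1)" "fst b \<in> {n-1, n+1}" "snd b = 2 * rm n \<xi>"
    by blast
  then show ?thesis
  proof cases
    case A1
    have I: "(j,p-1) \<in> Ihat n \<xi>" "(i,p) \<in> Ihat n \<xi>" "\<bar>i - j\<bar> = 1" using A1(3) unfolding Gamma_iff by auto
    have ri: "1 \<le> i" "i \<le> 2*n-2" "1 \<le> j" "j \<le> 2*n-2" using I unfolding Ihat_iff by auto
    have side: "(i \<le> n-1 \<and> j \<le> n-1) \<or> (n \<le> i \<and> n \<le> j)"
    proof (rule ccontr)
      assume "\<not> ?thesis"
      then have "(i = n-1 \<and> j = n) \<or> (i = n \<and> j = n-1)" using I(3) by auto
      then show False using A1(4) by auto
    qed
    define cj where "cj = fst a"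
    define ci where "ci = fst b"
    have a2: "a = (cj, 2*(p-1))" "b = (ci, 2*p)" unfolding cj_def ci_def using A1 gc_phi by (metis prod.collapse)+
    have cc: "cj \<noteq> n" "ci \<noteq> n" "gc cj = j" "gc ci = i" unfolding cj_def ci_def using A1 gc_phi by auto
    have adj: "\<bar>cj - ci\<bar> = 1" unfolding cj_def ci_def using A1(1,2) side I(3) unfolding phiD_def by auto
    have "memV (fst a) (snd a)" using memV_phi[OF I(1)] A1(1) by simp
    then have mj: "memV cj (2*(p-1))" using a2 by simp
    have "memV (fst b) (snd b)" using memV_phi[OF I(2)] A1(2) by simp
    then have mi: "memV ci (2*p)" using a2 by simp
    have xx: "x = ((rl cj, 2*(p-1)), (rl ci, 2*(p-1)+2))" using xr a2 by auto
    have d: "dd ci = 4" "dd cj = 4" using cc unfolding dd_def by auto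
    show ?thesis
    proof (cases "memV ci (2*(p-2))")
      case True
      have "(rl cj, 2*(p-1)) \<in> Ibar n \<xi> fl" using mj unfolding Ibar_iff by auto
      moreover have "(rl ci, 2*(p-1)+2) \<in> Ibar_e n vs" unfolding Ie_iff using mi True d
        by (intro exI[of _ ci]) (auto simp: algebra_simps)
      moreover have "rl cj \<le> n-1 \<and> rl ci \<le> n-1 \<and> \<bar>rl cj - rl ci\<bar> = 1" using rl_adj cc adj by blast
      ultimately have "x \<in> R2b" unfolding R2b_def using xx by blast
      then show ?thesis by blast
    next
      case False
      have "(i,p-2) \<notin> Ihat n \<xi>" using False memV_even[of ci "p-2"] cc mi memV_nn_even by auto
      then have "(j,p-3) \<notin> Ihat n \<xi>" using AR_bottom I by (auto simp: abs_minus_commute)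
      then have nj: "\<not> memV cj (2*(p-3))" using memV_even[of cj "p-3"] cc by auto
      have "(rl ci, 2*(p-1)+2) \<in> Ibar_f n vs" unfolding If_iff using mi False d
        by (intro exI[of _ ci]) (auto simp: algebra_simps)
      moreover have "(rl cj, 2*(p-1)) \<in> Ibar_f n vs" unfolding If_iff using mj nj d
        by (intro exI[of _ cj]) (auto simp: algebra_simps)
      ultimately have "x \<in> FF" unfolding FF_def using xx by auto
      then show ?thesis using nFF by blast
    qed
  next
    case A2
    have I: "(j,p-1) \<in> Ihat n \<xi>" using A2(3) unfolding Gamma_iff by auto
    have js: "j = n-1 \<or> j = n" using A2(4) by (auto simp: doubleton_eq_iff)
    define cj where "cj = fst a"
    have a2: "a = (cj, 2*(p-1))" unfolding cj_def using A2 gc_phi by (metis prod.collapse)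
    have cjs: "cj = n-1 \<or> cj = n+1" unfolding cj_def using A2(1) phi_side js by auto
    have cc: "cj \<noteq> n" "gc cj = j" unfolding cj_def using A2 gc_phi by auto
    have "memV (fst a) (snd a)" using memV_phi[OF I] A2(1) by simp
    then have mj: "memV cj (2*(p-1))" using a2 by simp
    have pb: "MM-(2*n-2)+1 \<le> p \<and> p \<le> MM" using special_iff[of p] A2 by blast
    have mn: "memV n (2*p-1)" unfolding memV_n using pb ee_cases by auto
    have xx: "x = ((n-1, 2*(p-1)), (n, 2*(p-1)+1))" using xr a2 A2(2) rl_side[OF cjs] by (auto simp: rl_def)
    have d: "dd n = 2" "dd cj = 4" using cc unfolding dd_def by auto
    show ?thesis
    proof (cases "memV n (2*p-3)")
      case True
      have "(n-1, 2*(p-1)) \<in> Ibar n \<xi> fl" using mj rl_side[OF cjs] unfolding Ibar_iff by auto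
      moreover have "(n, 2*(p-1)+1) \<in> Ibar_e n vs" unfolding Ie_iff using mn True d
        by (intro exI[of _ n]) (auto simp: algebra_simps rl_def)
      ultimately have "x \<in> R2c" unfolding R2c_def using xx by blast
      then show ?thesis by blast
    next
      case False
      have "2*p-1 = 2*(MM-(2*n-2)) + ee" using bottom_n[of "2*p-1"] mn False by (auto simp: algebra_simps)
      then have "p - 3 < MM-(2*n-2)" using ee_cases by auto
      then have "(j,p-3) \<notin> Ihat n \<xi>" using colS_lo js by fastforce
      then have nj: "\<not> memV cj (2*(p-3))" using memV_even[of cj "p-3"] cc by auto
      have "(n, 2*(p-1)+1) \<in> Ibar_f n vs" unfolding If_iff using mn False d
        by (intro exI[of _ n]) (auto simp: algebra_simps rl_def)
      moreover have "(n-1, 2*(p-1)) \<in> Ibar_f n vs" unfolding If_iff using mj nj d rl_side[OF cjs]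
        by (intro exI[of _ cj]) (auto simp: algebra_simps)
      ultimately have "x \<in> FF" unfolding FF_def using xx by auto
      then show ?thesis using nFF by blast
    qed
  next
    case A3
    have isn: "i = n-1 \<or> i = n" using A3(4) by (auto simp: doubleton_eq_iff)
    have "fst b = n-1 \<or> fst b = n+1" using A3(2) phi_side isn by auto
    then have "rl (fst b) = n-1" using rl_side by blast
    moreover have "snd b = 2*p" using A3(2) gc_phi by auto
    ultimately have "x = ((n, 2*p-1), (n-1, 2*p-1+1))" using xr A3(1) by (auto simp: rl_def)
    then have "x \<in> B2" unfolding B2_def by blast
    then show ?thesis using nB2 by blast
  next
    case A4
    obtain i p where ip: "(i,p) \<in> Ihat n \<xi>" "a = phiD n (i,p)" using A4(3) by auto
    have ma: "memV (fst a) (snd a)" using memV_phi ip by auto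
    have ra: "rl (fst a) = n-1" using A4(4) rl_side by auto
    have e: "ee = 1" using A4(1) unfolding ee_def by auto
    have mn: "memV n (2*MM+1)" "memV n (2*MM+1 - 2)" unfolding memV_n using e n2 by auto
    have xx: "x = ((n-1, 2*MM), (n, 2*MM+1))" using xr A4 ra rM_eq by (auto simp: rl_def)
    have "(n-1, 2*MM) \<in> Ibar n \<xi> fl" using ma ra A4(5) rM_eq unfolding Ibar_iff by auto
    moreover have "(n, 2*MM+1) \<in> Ibar_e n vs" unfolding Ie_iff using mn
      by (intro exI[of _ n]) (auto simp: dd_def rl_def)
    ultimately have "x \<in> R2c" unfolding R2c_def using xx by auto
    then show ?thesis by blast
  next
    case A5
    have "rl (fst b) = n-1" using A5(2) rl_side by auto
    then have "x = ((n, 2 * rm n \<xi> - 1), (n-1, 2 * rm n \<xi> - 1 + 1))" using xr A5 by (auto simp: rl_def)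
    then have "x \<in> B2" unfolding B2_def by blast
    then show ?thesis using nB2 by blast
  qed
qed

lemma R1_eq: "((map_prod (relabel n) (relabel n) ` UpsA n \<xi> fl \<union> B1) - B2 \<union> B3) - FF = LHS"
proof
  show "((map_prod (relabel n) (relabel n) ` UpsA n \<xi> fl \<union> B1) - B2 \<union> B3) - FF \<subseteq> LHS"
  proof
    fix x assume h: "x \<in> ((map_prod (relabel n) (relabel n) ` UpsA n \<xi> fl \<union> B1) - B2 \<union> B3) - FF"
    then have nF: "x \<notin> FF" by blast
    consider (a) "x \<in> B3" | (b) "x \<in> B1" | (c) "x \<in> map_prod (relabel n) (relabel n) ` UpsA n \<xi> fl" "x \<notin> B2"
      using h by blast
    then show "x \<in> LHS"
    proof cases
      case a then show ?thesis using B3_sub by blast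
    next
      case b then show ?thesis using B1_sub by blast
    next
      case c
      then obtain a b where ab: "(a,b) \<in> UpsA n \<xi> fl" "x = map_prod (relabel n) (relabel n) (a,b)" by auto
      have "x \<in> R2b \<union> R2c" using U3[OF ab c(2) nF] .
      then show ?thesis using R2b_sub R2c_sub by blast
    qed
  qed
next
  show "LHS \<subseteq> ((map_prod (relabel n) (relabel n) ` UpsA n \<xi> fl \<union> B1) - B2 \<union> B3) - FF"
  proof
    fix x assume xL: "x \<in> LHS"
    then have nF: "x \<notin> FF" using LHS_notFF unfolding FF_def by (cases x) auto
    have "x \<in> B1 \<union> R2b \<union> R2c \<union> B3" using xL R2_eq by blast
    moreover have "x \<in> B1 \<Longrightarrow> x \<notin> B2" unfolding B1_def B2_def by auto
    moreover have "x \<in> R2b \<Longrightarrow> x \<notin> B2" unfolding R2b_def B2_def by auto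
    moreover have "x \<in> R2c \<Longrightarrow> x \<notin> B2" unfolding R2c_def B2_def by auto
    ultimately show "x \<in> ((map_prod (relabel n) (relabel n) ` UpsA n \<xi> fl \<union> B1) - B2 \<union> B3) - FF"
      using nF U1 U2 by blast
  qed
qed

lemma main: "Bquiver_rel n vs = ((map_prod (relabel n) (relabel n) ` UpsA n \<xi> fl \<union> B1) - B2 \<union> B3) - FF
  \<and> Bquiver_rel n vs = B1 \<union> R2b \<union> R2c \<union> B3"
  using R1_eq R2_eq BQrel_eq by auto
end

theorem proposition6p1:
  fixes n :: int and Q :: "(int \<times> int) set" and \<xi> :: "int \<Rightarrow> int"
    and fl :: flat and vs :: "(int \<times> int) list"
  assumes n2: "n \<ge> 2"
    and Q_A: "\<forall>(i,j) \<in> Q. 1 \<le> i \<and> i \<le> 2*n-2 \<and> 1 \<le> j \<and> j \<le> 2*n-2 \<and> \<bar>i - j\<bar> = 1"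
    and Q_edges: "\<forall>i. 1 \<le> i \<and> i < 2*n-2 \<longrightarrow>
                     ((i, i+1) \<in> Q \<or> (i+1, i) \<in> Q) \<and> \<not> ((i, i+1) \<in> Q \<and> (i+1, i) \<in> Q)"
    and height: "\<forall>(i,j) \<in> Q. \<xi> j = \<xi> i + 1"
    and vs_dist: "distinct vs"
    and vs_set: "set vs = UpsV n \<xi> fl"
    and vs_sorted: "sorted_wrt (\<lambda>u v. snd u \<ge> snd v) vs"
  shows
    "Bquiver_rel n vs =
       ((map_prod (relabel n) (relabel n) ` UpsA n \<xi> fl
          \<union> {((i,r),(i, r - 2 * rr n i)) | i r. (i,r) \<in> Ibar n \<xi> fl \<and> (i, r - 2 * rr n i) \<in> Ibar n \<xi> fl})
        - {((n,r),(n-1,r+1)) | r. True}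
        \<union> {((n,r),(n-1,r+3)) | r. (n,r) \<in> Ibar n \<xi> fl \<and> (n-1,r+3) \<in> Ibar_e n vs})
       - {(u,v). u \<in> Ibar_f n vs \<and> v \<in> Ibar_f n vs}
     \<and> Bquiver_rel n vs =
         {((i,r),(i, r - 2 * rr n i)) | i r. (i,r) \<in> Ibar n \<xi> fl \<and> (i, r - 2 * rr n i) \<in> Ibar n \<xi> fl}
       \<union> {((i,r),(j,r+2)) | i j r. i \<le> n-1 \<and> j \<le> n-1 \<and> \<bar>i - j\<bar> = 1 \<and>
             (i,r) \<in> Ibar n \<xi> fl \<and> (j,r+2) \<in> Ibar_e n vs}
       \<union> {((n-1,r),(n,r+1)) | r. (n-1,r) \<in> Ibar n \<xi> fl \<and> (n,r+1) \<in> Ibar_e n vs}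
       \<union> {((n,r),(n-1,r+3)) | r. (n,r) \<in> Ibar n \<xi> fl \<and> (n-1,r+3) \<in> Ibar_e n vs}"
proof -
  interpret S n Q \<xi> fl vs
    by (unfold_locales; fact assms)
  show ?thesis
    using main unfolding B1_def B2_def B3_def R2b_def R2c_def FF_def .
qed

end
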